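(* Let $\kappa_*>0$ and $0<L<U<\infty$, and let $H^*$ be a probability measure on $[L,U]$. Suppose $X_1,\dots,X_n$ are generated by $X_i\mid\theta_i\overset{ind}{\sim}\mathrm{Poi}(\theta_i)$, $\theta_i\mid\lambda_i\overset{ind}{\sim}\mathrm{Gamma}(\kappa_*,\lambda_i)$ (shape-rate), $\lambda_i\overset{iid}{\sim}H^*$. Let $\widehat H_n$ be any maximizer $\widehat H_n\in\arg\max_{H\in\mathcal P([L,U])}\sum_{i=1}^n\log f_H(X_i)$. Then there exists $\alpha_*\in(0,1/2)$, depending only on $(L,U)$, such that $$\mathbb E_{H^*}\big[\mathrm{TV}(g_{\widehat H_n},g_{H^*})\big]\le C\,n^{-\alpha_*}(\log n)^{(1-\kappa_* )_++\alpha_*},$$ where $C>0$ depends only on $(\kappa_*,L,U)$.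
   Context: For $H$ a probability measure on $(0,\infty)$: $f_H(x)=\int\frac{\Gamma(x+\kappa_* )}{x!\,\Gamma(\kappa_* )}\left(\frac{1}{\lambda+1}\right)^x\left(\frac{\lambda}{\lambda+1}\right)^{\kappa_*}dH(\lambda)$, $x\in\mathbb Z_+$ (marginal pmf of $X_i$), and $g_H(\theta)=\int\frac{\lambda^{\kappa_*}}{\Gamma(\kappa_* )}\theta^{\kappa_*-1}e^{-\lambda\theta}\,dH(\lambda)$, $\theta>0$ (the Gamma-mixture prior density of $\theta_i$; $g_{\widehat H_n}$ is called the smooth NPMLE). $\mathrm{TV}(g,g')=\frac12\int_0^\infty|g(\theta)-g'(\theta)|\,d\theta$. $(t)_+=\max(t,0)$. $\mathcal P(A)$ is the set of probability measures on $A$; $\mathbb E_{H^*}$ is expectation under the model with $\lambda_i\sim H^*$. *)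

theory Defs
  imports "HOL-Probability.Probability"
begin

definition prob_on :: "real \<Rightarrow> real \<Rightarrow> real measure \<Rightarrow> bool" where
  "prob_on L U H \<longleftrightarrow> prob_space H \<and> sets H = sets borel \<and> (AE l in H. l \<in> {L..U})"

definition fH :: "real \<Rightarrow> real measure \<Rightarrow> nat \<Rightarrow> real" where
  "fH \<kappa> H x = (\<integral>l. Gamma (real x + \<kappa>) / (fact x * Gamma \<kappa>)
      * (1 / (l + 1)) ^ x * (l / (l + 1)) powr \<kappa> \<partial>H)"

definition gH :: "real \<Rightarrow> real measure \<Rightarrow> real \<Rightarrow> real" where
  "gH \<kappa> H \<theta> = (\<integral>l. l powr \<kappa> / Gamma \<kappa> * \<theta> powr (\<kappa> - 1) * exp (- l * \<theta>) \<partial>H)"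

definition TV :: "(real \<Rightarrow> real) \<Rightarrow> (real \<Rightarrow> real) \<Rightarrow> real" where
  "TV g g' = 1/2 * (LINT \<theta>:{0<..}|lborel. \<bar>g \<theta> - g' \<theta>\<bar>)"

definition loglik :: "real \<Rightarrow> real measure \<Rightarrow> nat list \<Rightarrow> real" where
  "loglik \<kappa> H xs = (\<Sum>i<length xs. ln (fH \<kappa> H (xs ! i)))"

definition is_npmle :: "real \<Rightarrow> real \<Rightarrow> real \<Rightarrow> nat list \<Rightarrow> real measure \<Rightarrow> bool" where
  "is_npmle \<kappa> L U xs Hh \<longleftrightarrow> prob_on L U Hh \<and>
     (\<forall>H. prob_on L U H \<longrightarrow> loglik \<kappa> H xs \<le> loglik \<kappa> Hh xs)"

text \<open>Expectation under the model with lambda_i iid H*: the X_i are iid with pmf f_{H*},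
so the expectation of a function of (X_1,...,X_n) is a countable sum.\<close>
definition expect_data :: "real \<Rightarrow> real measure \<Rightarrow> nat \<Rightarrow> (nat list \<Rightarrow> real) \<Rightarrow> real" where
  "expect_data \<kappa> Hs n F = infsum (\<lambda>xs. (\<Prod>i<n. fH \<kappa> Hs (xs ! i)) * F xs) {xs. length xs = n}"

end

theory Submission
  imports Defs "HOL-Complex_Analysis.Complex_Analysis"
begin


lemma psi_bound_circle:
  fixes \<kappa> \<theta> r :: real and z :: complex
  assumes "\<kappa> > 0" "\<theta> \<ge> 0" "0 < r" "r < 1" "norm z = r"
  shows "norm ((1 - z) powr (- of_real \<kappa>) * exp (- of_real \<theta> * z / (1 - z)))
          \<le> (1 - r) powr (- \<kappa>) * exp \<theta>"
proof -
  have n1: "norm (1 - z) \<ge> 1 - r" using norm_triangle_ineq2[of 1 z] assms by (simp add: norm_minus_commute)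
  have nz: "1 - z \<noteq> 0" using n1 assms by auto
  have "norm ((1 - z) powr (- of_real \<kappa>)) = norm (1 - z) powr (- \<kappa>)"
    by (subst norm_powr_real_powr') auto
  also have "\<dots> \<le> (1 - r) powr (- \<kappa>)"
    using n1 assms by (intro powr_mono2') auto
  finally have A: "norm ((1 - z) powr (- of_real \<kappa>)) \<le> (1 - r) powr (- \<kappa>)" .
  have "Re (1 - z) \<ge> 0" using complex_Re_le_cmod[of z] assms by simp
  hence "Re (1 / (1 - z)) \<ge> 0" by (simp add: Re_divide divide_nonneg_pos)
  moreover have "z / (1 - z) = 1 / (1 - z) - 1" using nz by (simp add: field_simps)
  ultimately have "Re (z / (1 - z)) \<ge> -1" by simp
  hence "\<theta> * (-1) \<le> \<theta> * Re (z / (1 - z))" using assms(2) by (intro mult_left_mono) auto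
  hence "Re (- of_real \<theta> * z / (1 - z)) \<le> \<theta>"
    by (simp add: mult.assoc[symmetric] times_divide_eq_right[symmetric] del: times_divide_eq_right)
  hence B: "norm (exp (- of_real \<theta> * z / (1 - z))) \<le> exp \<theta>" by simp
  show ?thesis unfolding norm_mult
    by (rule mult_mono[OF A B]) auto
qed

lemma psi_expansion:
  fixes \<kappa> \<theta> r sU :: real and k :: nat
  assumes "\<kappa> > 0" "\<theta> \<ge> 0" "0 < r" "r < 1" "0 \<le> sU" "sU < r"
  defines "M \<equiv> (1 - r) powr (- \<kappa>) * exp \<theta>"
  shows "\<exists>d::nat\<Rightarrow>real. (\<forall>j. \<bar>d j\<bar> \<le> M / r^j) \<and>
     (\<forall>s. 0 \<le> s \<longrightarrow> s \<le> sU \<longrightarrow>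
        \<bar>(1 - s) powr (- \<kappa>) * exp (- \<theta> * s / (1 - s)) - (\<Sum>j<k. d j * s^j)\<bar>
          \<le> M * (sU / r)^k / (1 - sU / r))"
proof -
  define \<psi> where "\<psi> = (\<lambda>z::complex. (1 - z) powr (- of_real \<kappa>) * exp (- of_real \<theta> * z / (1 - z)))"
  have re: "Re (1 - z) > 0" if "z \<in> ball 0 1" for z
    using that complex_Re_le_cmod[of z] by (auto simp: dist_norm)
  have hol: "\<psi> holomorphic_on ball 0 1"
    unfolding \<psi>_def
  proof (intro holomorphic_intros)
    fix z :: complex assume "z \<in> ball 0 1"
    from re[OF this] show "1 - z \<notin> \<real>\<^sub>\<le>\<^sub>0"
      by (auto simp: nonpos_Reals_def dest!: arg_cong[where f=Re])
    from re[OF \<open>z \<in> ball 0 1\<close>] show "1 - z \<noteq> 0" by auto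
  qed
  define c where "c = (\<lambda>j. (deriv ^^ j) \<psi> 0 / fact j)"
  define d where "d = (\<lambda>j. Re (c j))"
  have Mnn: "M \<ge> 0" unfolding M_def by simp
  have cb: "norm (c j) \<le> M / r^j" for j
  proof -
    have "norm ((deriv ^^ j) \<psi> 0) \<le> fact j * M / r^j"
    proof (rule Cauchy_inequality)
      show "\<psi> holomorphic_on ball 0 r" using assms by (intro holomorphic_on_subset[OF hol]) auto
      have "\<psi> holomorphic_on cball 0 r" using assms by (intro holomorphic_on_subset[OF hol]) auto
      thus "continuous_on (cball 0 r) \<psi>" by (rule holomorphic_on_imp_continuous_on)
      show "0 < r" by fact
      fix x :: complex assume "norm (0 - x) = r"
      thus "norm (\<psi> x) \<le> M" unfolding \<psi>_def M_def
        using psi_bound_circle[of \<kappa> \<theta> r x] assms by simp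
    qed
    thus ?thesis by (simp add: c_def norm_divide field_simps)
  qed
  have db: "\<bar>d j\<bar> \<le> M / r^j" for j
    using abs_Re_le_cmod[of "c j"] cb[of j] unfolding d_def by linarith
  have main: "\<bar>(1 - s) powr (- \<kappa>) * exp (- \<theta> * s / (1 - s)) - (\<Sum>j<k. d j * s^j)\<bar>
          \<le> M * (sU / r)^k / (1 - sU / r)" if s: "0 \<le> s" "s \<le> sU" for s
  proof -
    have sb: "of_real s \<in> ball (0::complex) 1" using s assms by auto
    have S: "(\<lambda>n. c n * of_real s ^ n) sums \<psi> (of_real s)"
      using holomorphic_power_series[OF hol sb] by (simp add: c_def)
    have S2: "(\<lambda>i. c (i + k) * of_real s ^ (i + k)) sums (\<psi> (of_real s) - (\<Sum>i<k. c i * of_real s ^ i))"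
      using sums_split_initial_segment[OF S, of k] by simp
    have q0: "0 \<le> sU / r" "sU / r < 1" using assms by auto
    have gs: "(\<lambda>i. M * (sU / r) ^ k * (sU / r) ^ i) sums (M * (sU / r) ^ k * (1 / (1 - sU / r)))"
      by (intro sums_mult geometric_sums) (use q0 in auto)
    have nb: "norm (c (i + k) * of_real s ^ (i + k)) \<le> M * (sU / r) ^ k * (sU / r) ^ i" for i
    proof -
      have "norm (c (i + k) * of_real s ^ (i + k)) \<le> M / r^(i+k) * s^(i+k)"
        using mult_right_mono[OF cb[of "i+k"], of "s^(i+k)"] s by (simp add: norm_mult norm_power)
      also have "\<dots> \<le> M / r^(i+k) * sU^(i+k)"
        using s Mnn assms by (intro mult_left_mono power_mono) auto
      also have "\<dots> = M * (sU / r) ^ k * (sU / r) ^ i"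
        by (simp add: power_add power_divide field_simps)
      finally show ?thesis .
    qed
    have NB: "norm (\<psi> (of_real s) - (\<Sum>i<k. c i * of_real s ^ i)) \<le> M * (sU / r) ^ k * (1 / (1 - sU / r))"
      using norm_suminf_le[OF nb sums_summable[OF gs]] sums_unique[OF S2] sums_unique[OF gs] by simp
    have PS: "\<psi> (of_real s) = of_real ((1 - s) powr (- \<kappa>) * exp (- \<theta> * s / (1 - s)))"
    proof -
      have "(1 - complex_of_real s) powr (- of_real \<kappa>) = of_real ((1 - s) powr (- \<kappa>))"
        using powr_of_real[of "1 - s" "-\<kappa>"] s assms by simp
      moreover have "exp (- of_real \<theta> * of_real s / (1 - of_real s)) = (of_real (exp (- \<theta> * s / (1 - s))) :: complex)"
        by (simp flip: exp_of_real)
      ultimately show ?thesis unfolding \<psi>_def by simp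
    qed
    define X where "X = \<psi> (of_real s) - (\<Sum>i<k. c i * of_real s ^ i)"
    have RX: "Re X = (1 - s) powr (- \<kappa>) * exp (- \<theta> * s / (1 - s)) - (\<Sum>j<k. d j * s^j)"
      unfolding X_def PS by (simp add: d_def Re_sum)
    have "\<bar>Re X\<bar> \<le> norm X" by (rule abs_Re_le_cmod)
    with NB RX show ?thesis unfolding X_def by simp
  qed
  show ?thesis using db main by blast
qed


definition sfun :: "real \<Rightarrow> real" where "sfun l = l / (l + 1)"
definition tfun :: "real \<Rightarrow> real" where "tfun l = 1 / (l + 1)"
definition cc :: "real \<Rightarrow> nat \<Rightarrow> real" where "cc \<kappa> x = Gamma (real x + \<kappa>) / (fact x * Gamma \<kappa>)"
definition mom :: "real \<Rightarrow> real measure \<Rightarrow> nat \<Rightarrow> real" where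
  "mom \<kappa> H x = (\<integral>l. tfun l ^ x * sfun l powr \<kappa> \<partial>H)"

lemma fH_mom: "fH \<kappa> H x = cc \<kappa> x * mom \<kappa> H x"
  unfolding fH_def mom_def cc_def sfun_def tfun_def
  by (subst integral_mult_right_zero[symmetric]) (simp add: mult.assoc)

lemma cc_poch: "\<kappa> > 0 \<Longrightarrow> cc \<kappa> x = pochhammer \<kappa> x / fact x"
proof -
  assume k: "\<kappa> > 0"
  have "\<kappa> \<notin> \<int>\<^sub>\<le>\<^sub>0" using k by (auto elim!: nonpos_Ints_cases)
  hence "pochhammer \<kappa> x = Gamma (\<kappa> + real x) / Gamma \<kappa>" by (rule pochhammer_Gamma)
  thus ?thesis unfolding cc_def by (simp add: add.commute field_simps)
qed

lemma cc_pos: "\<kappa> > 0 \<Longrightarrow> cc \<kappa> x > 0"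
  by (simp add: cc_poch pochhammer_pos)

lemma cc_Suc: "\<kappa> > 0 \<Longrightarrow> cc \<kappa> (Suc x) = cc \<kappa> x * (\<kappa> + x) / (x + 1)"
  by (simp add: cc_poch pochhammer_Suc field_simps)

lemma cc_lower: assumes "\<kappa> > 0" shows "cc \<kappa> x \<ge> min \<kappa> 1 / (x + 1)"
proof -
  have A: "cc \<kappa> (Suc i) \<ge> min \<kappa> 1 / (Suc i)" for i
  proof (induction i)
    case 0 thus ?case using assms by (simp add: cc_Suc cc_poch)
  next
    case (Suc i)
    have "min \<kappa> 1 / (Suc (Suc i)) = (min \<kappa> 1 / Suc i) * (Suc i / (Suc i + 1))"
      by (simp only: times_divide_times_eq) (simp add: divide_simps)
    also have "\<dots> \<le> cc \<kappa> (Suc i) * ((\<kappa> + Suc i) / (Suc i + 1))"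
      using Suc assms less_imp_le[OF cc_pos[OF assms]] by (intro mult_mono) (auto simp: field_simps)
    also have "\<dots> = cc \<kappa> (Suc (Suc i))" by (subst cc_Suc[OF assms, of "Suc i"]) (simp add: field_simps)
    finally show ?case .
  qed
  show ?thesis
  proof (cases x)
    case 0 thus ?thesis using assms by (simp add: cc_poch)
  next
    case (Suc i)
    have "min \<kappa> 1 / (x + 1) \<le> min \<kappa> 1 / Suc i" using Suc assms by (intro divide_left_mono) auto
    thus ?thesis using A[of i] Suc by simp
  qed
qed

lemma nb_sums: assumes "\<kappa> > 0" "0 \<le> t" "t < 1"
  shows "(\<lambda>x. cc \<kappa> x * t ^ x) sums (1 - t) powr (- \<kappa>)"
proof -
  have "(\<lambda>n. ((- \<kappa>) gchoose n) * (- t)^n) sums (1 + (- t)) powr (- \<kappa>)"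
    using assms by (intro gen_binomial_real) auto
  moreover have "((- \<kappa>) gchoose n) * (- t)^n = cc \<kappa> n * t ^ n" for n
    using assms by (simp add: gbinomial_pochhammer cc_poch power_mult_distrib[symmetric] field_simps)
  ultimately show ?thesis by simp
qed

lemma prob_onD: assumes "prob_on L U H"
  shows "prob_space H" "sets H = sets borel" "AE l in H. l \<in> {L..U}" "space H = UNIV"
  using assms unfolding prob_on_def by (auto dest: sets_eq_imp_space_eq)

lemma integrable_on_LU:
  fixes f :: "real \<Rightarrow> real"
  assumes H: "prob_on L U H" and f: "f \<in> borel_measurable borel"
    and b: "\<And>l. L \<le> l \<Longrightarrow> l \<le> U \<Longrightarrow> \<bar>f l\<bar> \<le> B"
  shows "integrable H f"
proof -
  interpret prob_space H using prob_onD[OF H] by simp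
  have fm: "f \<in> borel_measurable H" using f prob_onD(2)[OF H] by (simp cong: measurable_cong_sets)
  have c: "integrable H (\<lambda>_. B)" by simp
  have ae: "AE x in H. norm (f x) \<le> norm B"
    using prob_onD(3)[OF H] by eventually_elim (use b in force)
  show ?thesis by (rule Bochner_Integration.integrable_bound[OF c fm ae])
qed

lemma integral_mono_LU:
  fixes f g :: "real \<Rightarrow> real"
  assumes H: "prob_on L U H" and "integrable H f" "integrable H g"
    and b: "\<And>l. L \<le> l \<Longrightarrow> l \<le> U \<Longrightarrow> f l \<le> g l"
  shows "integral\<^sup>L H f \<le> integral\<^sup>L H g"
proof -
  have "AE l in H. f l \<le> g l" using prob_onD(3)[OF H] by eventually_elim (use b in auto)
  with assms(2,3) show ?thesis by (intro integral_mono_AE)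
qed

lemma integral_abs_LU:
  fixes f :: "real \<Rightarrow> real"
  assumes H: "prob_on L U H" and f: "f \<in> borel_measurable borel"
    and b: "\<And>l. L \<le> l \<Longrightarrow> l \<le> U \<Longrightarrow> \<bar>f l\<bar> \<le> B"
  shows "\<bar>integral\<^sup>L H f\<bar> \<le> B"
proof -
  interpret prob_space H using prob_onD[OF H] by simp
  have i: "integrable H f" by (rule integrable_on_LU[OF H f b])
  have "\<bar>integral\<^sup>L H f\<bar> \<le> integral\<^sup>L H (\<lambda>l. \<bar>f l\<bar>)" by (rule integral_abs_bound)
  also have "\<dots> \<le> integral\<^sup>L H (\<lambda>_. B)"
    by (rule integral_mono_LU[OF H]) (use i b in auto)
  finally show ?thesis by (simp add: prob_space)
qed

lemma integral_lower_LU: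
  fixes f :: "real \<Rightarrow> real"
  assumes H: "prob_on L U H" and i: "integrable H f"
    and b: "\<And>l. L \<le> l \<Longrightarrow> l \<le> U \<Longrightarrow> B \<le> f l"
  shows "B \<le> integral\<^sup>L H f"
proof -
  interpret prob_space H using prob_onD[OF H] by simp
  have "integral\<^sup>L H (\<lambda>_. B) \<le> integral\<^sup>L H f"
    by (rule integral_mono_LU[OF H]) (use i b in auto)
  thus ?thesis by (simp add: prob_space)
qed

lemma integral_upper_LU:
  fixes f :: "real \<Rightarrow> real"
  assumes H: "prob_on L U H" and i: "integrable H f"
    and b: "\<And>l. L \<le> l \<Longrightarrow> l \<le> U \<Longrightarrow> f l \<le> B"
  shows "integral\<^sup>L H f \<le> B"
proof -
  interpret prob_space H using prob_onD[OF H] by simp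
  have "integral\<^sup>L H f \<le> integral\<^sup>L H (\<lambda>_. B)"
    by (rule integral_mono_LU[OF H]) (use i b in auto)
  thus ?thesis by (simp add: prob_space)
qed

lemma meas_mom: "(\<lambda>l. tfun l ^ x * sfun l powr \<kappa>) \<in> borel_measurable borel"
  unfolding sfun_def tfun_def by measurable


locale LU =
  fixes L U :: real
  assumes L0: "0 < L" and LU: "L < U"
begin

definition "sL = L / (L + 1)"
definition "sU = U / (U + 1)"
definition "tL = 1 / (L + 1)"
definition "tU = 1 / (U + 1)"

lemma basic: "0 < sL" "sL < sU" "sU < 1" "0 < tU" "tU < tL" "tL < 1" "sL < 1" "0 < sU" "0 < tL" "tU < 1"
  using L0 LU by (auto simp: sL_def sU_def tL_def tU_def field_simps)

lemma sfun_bd: "L \<le> l \<Longrightarrow> l \<le> U \<Longrightarrow> sL \<le> sfun l \<and> sfun l \<le> sU"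
  using L0 by (auto simp: sL_def sU_def sfun_def field_simps)

lemma tfun_bd: "L \<le> l \<Longrightarrow> l \<le> U \<Longrightarrow> tU \<le> tfun l \<and> tfun l \<le> tL"
  using L0 by (auto simp: tL_def tU_def tfun_def field_simps)

lemma st: "L \<le> l \<Longrightarrow> 1 - tfun l = sfun l"
  using L0 by (auto simp: sfun_def tfun_def field_simps)

lemma mom_bounds: assumes H: "prob_on L U H" and k: "\<kappa> > 0"
  shows "tU ^ x * sL powr \<kappa> \<le> mom \<kappa> H x" "mom \<kappa> H x \<le> tL ^ x"
    "integrable H (\<lambda>l. tfun l ^ x * sfun l powr \<kappa>)"
proof -
  have b: "tU ^ x * sL powr \<kappa> \<le> tfun l ^ x * sfun l powr \<kappa> \<and> tfun l ^ x * sfun l powr \<kappa> \<le> tL ^ x"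
    if "L \<le> l" "l \<le> U" for l
  proof -
    have "tU ^ x * sL powr \<kappa> \<le> tfun l ^ x * sfun l powr \<kappa>"
      using tfun_bd[OF that] sfun_bd[OF that] basic k
      by (intro mult_mono power_mono powr_mono2) auto
    moreover have "tfun l ^ x * sfun l powr \<kappa> \<le> tL ^ x * 1"
      using tfun_bd[OF that] sfun_bd[OF that] basic k
      by (intro mult_mono power_mono) (auto intro!: powr_le1)
    ultimately show ?thesis by simp
  qed
  show i: "integrable H (\<lambda>l. tfun l ^ x * sfun l powr \<kappa>)"
  proof (rule integrable_on_LU[OF H meas_mom, where B="tL ^ x"])
    fix l assume l: "L \<le> l" "l \<le> U"
    have "0 \<le> tU ^ x * sL powr \<kappa>" using basic by simp
    with b[OF l] show "\<bar>tfun l ^ x * sfun l powr \<kappa>\<bar> \<le> tL ^ x" by auto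
  qed
  show "tU ^ x * sL powr \<kappa> \<le> mom \<kappa> H x" unfolding mom_def
    by (rule integral_lower_LU[OF H i]) (use b in auto)
  show "mom \<kappa> H x \<le> tL ^ x" unfolding mom_def
    by (rule integral_upper_LU[OF H i]) (use b in auto)
qed

lemma fH_bounds: assumes H: "prob_on L U H" and k: "\<kappa> > 0"
  shows "cc \<kappa> x * (tU ^ x * sL powr \<kappa>) \<le> fH \<kappa> H x" "fH \<kappa> H x \<le> cc \<kappa> x * tL ^ x"
    "fH \<kappa> H x > 0"
proof -
  have c: "cc \<kappa> x > 0" by (rule cc_pos[OF k])
  show l: "cc \<kappa> x * (tU ^ x * sL powr \<kappa>) \<le> fH \<kappa> H x"
    unfolding fH_mom using mom_bounds[OF H k] c by (intro mult_left_mono) auto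
  show "fH \<kappa> H x \<le> cc \<kappa> x * tL ^ x"
    unfolding fH_mom using mom_bounds[OF H k] c by (intro mult_left_mono) auto
  have "0 < cc \<kappa> x * (tU ^ x * sL powr \<kappa>)" using c basic by simp
  with l show "fH \<kappa> H x > 0" by linarith
qed

lemma fH_sums: assumes H: "prob_on L U H" and k: "\<kappa> > 0"
  shows "(\<lambda>x. fH \<kappa> H x) sums 1"
proof -
  interpret prob_space H using prob_onD[OF H] by simp
  define g where "g = (\<lambda>i l. cc \<kappa> i * (tfun l ^ i * sfun l powr \<kappa>))"
  have gi: "integrable H (g i)" for i unfolding g_def using mom_bounds(3)[OF H k] by simp
  have gI: "integral\<^sup>L H (g i) = fH \<kappa> H i" for i unfolding g_def fH_mom mom_def by simp
  have gs: "(\<lambda>i. g i l) sums 1" if "L \<le> l" "l \<le> U" for l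
  proof -
    have t: "0 \<le> tfun l" "tfun l < 1" using tfun_bd[OF that] basic by auto
    have "(\<lambda>i. cc \<kappa> i * tfun l ^ i * sfun l powr \<kappa>) sums ((1 - tfun l) powr (- \<kappa>) * sfun l powr \<kappa>)"
      by (intro sums_mult2 nb_sums k t)
    moreover have "(1 - tfun l) powr (- \<kappa>) * sfun l powr \<kappa> = 1"
    proof -
      have e: "1 - tfun l = sfun l" by (rule st[OF that(1)])
      have "sfun l > 0" using sfun_bd[OF that] basic by auto
      thus ?thesis unfolding e by (simp add: powr_minus)
    qed
    ultimately show ?thesis by (simp add: g_def mult.assoc)
  qed
  have gn: "0 \<le> g i l" if "L \<le> l" for i l
    using tfun_bd sfun_bd cc_pos[OF k, of i] that L0 unfolding g_def tfun_def by simp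
  have ae1: "AE l in H. summable (\<lambda>i. norm (g i l))"
    using prob_onD(3)[OF H] by eventually_elim (use gs gn in \<open>auto intro: sums_summable\<close>)
  have fs: "summable (\<lambda>i. fH \<kappa> H i)"
  proof (rule summable_comparison_test'[where g="\<lambda>i. cc \<kappa> i * tL ^ i"])
    show "summable (\<lambda>i. cc \<kappa> i * tL ^ i)" using nb_sums[OF k, of tL] basic sums_summable by auto
    show "norm (fH \<kappa> H i) \<le> cc \<kappa> i * tL ^ i" for i
      using fH_bounds[OF H k, of i] by simp
  qed
  have nI: "integral\<^sup>L H (\<lambda>l. norm (g i l)) = fH \<kappa> H i" for i
  proof -
    have "integral\<^sup>L H (\<lambda>l. norm (g i l)) = integral\<^sup>L H (g i)"
      by (rule integral_cong_AE) (use prob_onD(3)[OF H] gn gi in \<open>auto elim!: eventually_mono\<close>)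
    thus ?thesis using gI by simp
  qed
  have "(\<lambda>i. integral\<^sup>L H (g i)) sums (\<integral>l. (\<Sum>i. g i l) \<partial>H)"
    by (rule sums_integral[OF gi ae1]) (use fs nI in simp)
  moreover have "(\<integral>l. (\<Sum>i. g i l) \<partial>H) = (\<integral>l. 1 \<partial>H)"
  proof (rule integral_cong_AE)
    have si: "integrable H (\<lambda>l. \<Sum>i. g i l)" by (rule integrable_suminf[OF gi ae1]) (use fs nI in simp)
    thus "(\<lambda>l. \<Sum>i. g i l) \<in> borel_measurable H" by (rule borel_measurable_integrable)
    show "(\<lambda>l. 1::real) \<in> borel_measurable H" by simp
    show "AE l in H. (\<Sum>i. g i l) = 1"
      using prob_onD(3)[OF H] by eventually_elim (metis atLeastAtMost_iff gs sums_unique)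
  qed
  ultimately show ?thesis using gI by (simp add: prob_space)
qed

lemma fH_le1: assumes H: "prob_on L U H" and k: "\<kappa> > 0" shows "fH \<kappa> H x \<le> 1"
proof -
  have "fH \<kappa> H x \<le> (\<Sum>i. fH \<kappa> H i)"
    using sum_le_suminf[OF sums_summable[OF fH_sums[OF H k]], of "{x}"] fH_bounds(3)[OF H k] by (simp add: less_imp_le)
  thus ?thesis using sums_unique[OF fH_sums[OF H k]] by simp
qed

end


lemma integral_cong_LU:
  fixes f g :: "real \<Rightarrow> real"
  assumes H: "prob_on L U H" and f: "f \<in> borel_measurable borel" and g: "g \<in> borel_measurable borel"
    and e: "\<And>l. L \<le> l \<Longrightarrow> l \<le> U \<Longrightarrow> f l = g l"
  shows "integral\<^sup>L H f = integral\<^sup>L H g"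
proof (rule integral_cong_AE)
  show "f \<in> borel_measurable H" "g \<in> borel_measurable H"
    using f g prob_onD(2)[OF H] by (simp_all cong: measurable_cong_sets)
  show "AE x in H. f x = g x" using prob_onD(3)[OF H] by eventually_elim (use e in auto)
qed

lemma gamma_scaled:
  fixes a \<kappa> :: real assumes a: "a > 0" and k: "\<kappa> > 0"
  shows "set_integrable lborel {0<..} (\<lambda>\<theta>. \<theta> powr (\<kappa> - 1) * exp (- a * \<theta>))"
    "(LINT \<theta>:{0<..}|lborel. \<theta> powr (\<kappa> - 1) * exp (- a * \<theta>)) = Gamma \<kappa> / a powr \<kappa>"
proof -
  define F where "F = (\<lambda>t::real. indicator {0..} t * t powr (\<kappa> - 1) / exp t)"
  have Fm: "F \<in> borel_measurable lborel" unfolding F_def by measurable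
  have "(\<integral>\<^sup>+t. ennreal (F t) \<partial>lborel) = ennreal (Gamma \<kappa>)"
    using Gamma_conv_nn_integral_real[OF k] unfolding F_def by simp
  hence FI: "integrable lborel F" "integral\<^sup>L lborel F = Gamma \<kappa>"
    using nn_integral_eq_integrable[OF Fm _ less_imp_le[OF Gamma_real_pos[OF k]]]
    by (auto simp: F_def)
  have eq: "indicator {0<..} \<theta> * (\<theta> powr (\<kappa> - 1) * exp (- a * \<theta>)) = a powr (1 - \<kappa>) * F (0 + a * \<theta>)" for \<theta>
  proof (cases "\<theta> > 0")
    case True
    thus ?thesis using a by (simp add: F_def powr_mult powr_diff exp_minus field_simps)
  next
    case False
    thus ?thesis using a by (auto simp: F_def indicator_def zero_le_mult_iff)
  qed
  have i2: "integrable lborel (\<lambda>\<theta>. F (0 + a * \<theta>))"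
    using lborel_integrable_real_affine_iff[of a F 0] FI a by simp
  show "set_integrable lborel {0<..} (\<lambda>\<theta>. \<theta> powr (\<kappa> - 1) * exp (- a * \<theta>))"
    unfolding set_integrable_def by (simp only: real_scaleR_def eq) (use i2 in simp)
  have "integral\<^sup>L lborel F = a *\<^sub>R (\<integral>\<theta>. F (0 + a * \<theta>) \<partial>lborel)"
    using lborel_integral_real_affine[of a F 0] a by simp
  hence v: "(\<integral>\<theta>. F (0 + a * \<theta>) \<partial>lborel) = Gamma \<kappa> / a" using FI a by (simp add: field_simps)
  have "(LINT \<theta>:{0<..}|lborel. \<theta> powr (\<kappa> - 1) * exp (- a * \<theta>)) = (\<integral>\<theta>. a powr (1 - \<kappa>) * F (0 + a * \<theta>) \<partial>lborel)"
    unfolding set_lebesgue_integral_def by (simp only: real_scaleR_def eq)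
  also have "\<dots> = a powr (1 - \<kappa>) * (Gamma \<kappa> / a)" using v by (simp del: times_divide_eq_right)
  also have "\<dots> = Gamma \<kappa> / a powr \<kappa>" using a by (simp add: powr_diff field_simps)
  finally show "(LINT \<theta>:{0<..}|lborel. \<theta> powr (\<kappa> - 1) * exp (- a * \<theta>)) = Gamma \<kappa> / a powr \<kappa>" .
qed

lemma interp_le:
  fixes x a b \<beta> :: real
  assumes "0 \<le> x" "x \<le> a" "x \<le> b" "0 < \<beta>" "\<beta> < 1"
  shows "x \<le> a powr \<beta> * b powr (1 - \<beta>)"
proof (cases "x = 0")
  case True thus ?thesis by simp
next
  case False
  hence "x = x powr \<beta> * x powr (1 - \<beta>)" using assms by (simp add: powr_add[symmetric])
  also have "\<dots> \<le> a powr \<beta> * b powr (1 - \<beta>)"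
    using assms by (intro mult_mono powr_mono2) auto
  finally show ?thesis .
qed

context LU begin
definition "r = (1 + sU) / 2"
definition "q = sU / r"
definition "\<rho> = 8 / r"
definition "\<beta> = L / (2 * (1 + L))"
end

locale LUk = LU +
  fixes \<kappa> :: real
  assumes k0: "\<kappa> > 0"
begin

definition "mk = min \<kappa> 1"
definition "M \<theta> = (1 - r) powr (- \<kappa>) * exp \<theta>"
definition "\<Phi> \<epsilon> k = \<rho> ^ k * \<epsilon> / mk + 2 * q ^ k / (1 - q)"

lemma cst: "0 < r" "r < 1" "sU < r" "0 < q" "q < 1" "\<rho> > 1" "mk > 0" "mk \<le> 1" "2 / r \<ge> 1"
proof -
  have b: "0 < sU" "sU < 1" using basic by auto
  show "0 < r" "r < 1" "sU < r" using b unfolding r_def by auto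
  show "0 < q" "q < 1" using b unfolding q_def r_def by (auto simp: divide_simps)
  show "\<rho> > 1" using b unfolding \<rho>_def r_def by (auto simp: divide_simps)
  show "mk > 0" "mk \<le> 1" using k0 unfolding mk_def by auto
  show "2 / r \<ge> 1" using b unfolding r_def by (auto simp: divide_simps)
qed

lemma M_pos: "M \<theta> > 0" unfolding M_def using cst by simp

definition "Bm H j = (\<integral>l. sfun l powr \<kappa> * sfun l ^ j \<partial>H)"

lemma meas_Bm: "(\<lambda>l. sfun l powr \<kappa> * sfun l ^ j) \<in> borel_measurable borel"
  unfolding sfun_def by measurable

lemma Bm_expand: assumes H: "prob_on L U H"
  shows "Bm H j = (\<Sum>i\<le>j. of_nat (j choose i) * (-1)^i * mom \<kappa> H i)"
proof -
  have "Bm H j = (\<integral>l. (\<Sum>i\<le>j. of_nat (j choose i) * (-1)^i * (tfun l ^ i * sfun l powr \<kappa>)) \<partial>H)"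
    unfolding Bm_def
  proof (rule integral_cong_LU[OF H meas_Bm])
    show "(\<lambda>l. \<Sum>i\<le>j. of_nat (j choose i) * (-1)^i * (tfun l ^ i * sfun l powr \<kappa>)) \<in> borel_measurable borel"
      unfolding sfun_def tfun_def by measurable
    fix l assume l: "L \<le> l" "l \<le> U"
    have "sfun l ^ j = (- tfun l + 1) ^ j" using st[OF l(1)] by simp
    also have "\<dots> = (\<Sum>i\<le>j. of_nat (j choose i) * (- tfun l) ^ i * 1 ^ (j - i))"
      by (rule binomial_ring)
    also have "\<dots> = (\<Sum>i\<le>j. of_nat (j choose i) * (-1)^i * tfun l ^ i)"
      by (rule sum.cong) (simp_all add: power_mult_distrib[symmetric])
    finally have E: "sfun l ^ j = (\<Sum>i\<le>j. of_nat (j choose i) * (-1)^i * tfun l ^ i)" .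
    show "sfun l powr \<kappa> * sfun l ^ j = (\<Sum>i\<le>j. of_nat (j choose i) * (-1)^i * (tfun l ^ i * sfun l powr \<kappa>))"
      unfolding E sum_distrib_left by (rule sum.cong) (simp_all add: mult.assoc mult.left_commute)
  qed
  also have "\<dots> = (\<Sum>i\<le>j. of_nat (j choose i) * (-1)^i * mom \<kappa> H i)"
    unfolding mom_def
    by (subst Bochner_Integration.integral_sum) (use mom_bounds(3)[OF H k0] in \<open>auto intro!: integrable_mult_right simp: integral_mult_right_zero\<close>)
  finally show ?thesis .
qed

lemma mom_diff: assumes H1: "prob_on L U H1" and H2: "prob_on L U H2"
  and e: "\<And>i. \<bar>fH \<kappa> H1 i - fH \<kappa> H2 i\<bar> \<le> \<epsilon>"
  shows "\<bar>mom \<kappa> H1 i - mom \<kappa> H2 i\<bar> \<le> \<epsilon> * (i + 1) / mk"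
proof -
  have c: "cc \<kappa> i \<ge> mk / (i + 1)" "cc \<kappa> i > 0" using cc_lower[OF k0, of i] cc_pos[OF k0] by (auto simp: mk_def)
  have "\<bar>fH \<kappa> H1 i - fH \<kappa> H2 i\<bar> = cc \<kappa> i * \<bar>mom \<kappa> H1 i - mom \<kappa> H2 i\<bar>"
    using c by (simp add: fH_mom right_diff_distrib[symmetric] abs_mult)
  hence "cc \<kappa> i * \<bar>mom \<kappa> H1 i - mom \<kappa> H2 i\<bar> \<le> \<epsilon>" using e[of i] by simp
  moreover have "mk / (i + 1) * \<bar>mom \<kappa> H1 i - mom \<kappa> H2 i\<bar> \<le> cc \<kappa> i * \<bar>mom \<kappa> H1 i - mom \<kappa> H2 i\<bar>"
    using c by (intro mult_right_mono) auto
  ultimately have "mk / (i + 1) * \<bar>mom \<kappa> H1 i - mom \<kappa> H2 i\<bar> \<le> \<epsilon>" by linarith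
  thus ?thesis using cst(7) by (simp add: field_simps)
qed

lemma Bm_diff: assumes H1: "prob_on L U H1" and H2: "prob_on L U H2"
  and e: "\<And>i. \<bar>fH \<kappa> H1 i - fH \<kappa> H2 i\<bar> \<le> \<epsilon>"
  shows "\<bar>Bm H1 j - Bm H2 j\<bar> \<le> 2 ^ j * (\<epsilon> * (j + 1) / mk)"
proof -
  have "Bm H1 j - Bm H2 j = (\<Sum>i\<le>j. of_nat (j choose i) * (-1)^i * (mom \<kappa> H1 i - mom \<kappa> H2 i))"
    unfolding Bm_expand[OF H1] Bm_expand[OF H2] by (simp add: sum_subtractf right_diff_distrib)
  also have "\<bar>\<dots>\<bar> \<le> (\<Sum>i\<le>j. of_nat (j choose i) * (\<epsilon> * (j + 1) / mk))"
  proof (rule order_trans[OF sum_abs], rule sum_mono)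
    fix i assume i: "i \<in> {..j}"
    have "\<bar>mom \<kappa> H1 i - mom \<kappa> H2 i\<bar> \<le> \<epsilon> * (i + 1) / mk" by (rule mom_diff[OF H1 H2 e])
    also have "\<dots> \<le> \<epsilon> * (j + 1) / mk"
    proof -
      have "0 \<le> \<epsilon>" using e[of 0] by linarith
      thus ?thesis using i cst by (intro divide_right_mono mult_left_mono) auto
    qed
    finally show "\<bar>of_nat (j choose i) * (-1)^i * (mom \<kappa> H1 i - mom \<kappa> H2 i)\<bar> \<le> of_nat (j choose i) * (\<epsilon> * (j + 1) / mk)"
      by (simp add: abs_mult mult_left_mono del: times_divide_eq_right)
  qed
  also have "\<dots> = 2 ^ j * (\<epsilon> * (j + 1) / mk)"
  proof -
    have "(\<Sum>i\<le>j. real (j choose i)) = 2^j" by (simp flip: of_nat_sum add: choose_row_sum)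
    thus ?thesis by (simp only: sum_distrib_right[symmetric])
  qed
  finally show ?thesis .
qed

definition "Gd H1 H2 \<theta> = (\<integral>l. l powr \<kappa> * exp (- l * \<theta>) \<partial>H1) - (\<integral>l. l powr \<kappa> * exp (- l * \<theta>) \<partial>H2)"

lemma sq_le_4pow: "real k * real k \<le> 4 ^ k"
proof -
  have "k < 2 ^ k" by (rule less_exp)
  hence "real k \<le> 2 ^ k" by (metis less_imp_le of_nat_le_iff of_nat_numeral of_nat_power)
  hence "real k * real k \<le> 2 ^ k * 2 ^ k" by (intro mult_mono) auto
  thus ?thesis by (simp add: power_mult_distrib[symmetric])
qed

lemma lk_identity: assumes "L \<le> l" shows
  "l powr \<kappa> * exp (- l * \<theta>) = sfun l powr \<kappa> * ((1 - sfun l) powr (- \<kappa>) * exp (- \<theta> * sfun l / (1 - sfun l)))"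
proof -
  have l0: "l > 0" using assms L0 by simp
  have e1: "1 - sfun l = 1 / (l + 1)" using l0 by (simp add: sfun_def field_simps)
  have "(1 - sfun l) powr (- \<kappa>) = (l + 1) powr \<kappa>" unfolding e1 using l0
    by (simp add: powr_minus powr_divide)
  moreover have "sfun l powr \<kappa> * (l + 1) powr \<kappa> = l powr \<kappa>"
    using l0 by (simp add: sfun_def powr_mult[symmetric])
  moreover have "\<theta> * sfun l / (1 - sfun l) = l * \<theta>" unfolding e1 using l0 by (simp add: sfun_def field_simps)
  ultimately show ?thesis by (simp add: mult.assoc[symmetric])
qed

lemma G_poly: assumes H1: "prob_on L U H1" and H2: "prob_on L U H2" and th: "\<theta> \<ge> 0"
  and e: "\<And>i. \<bar>fH \<kappa> H1 i - fH \<kappa> H2 i\<bar> \<le> \<epsilon>"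
  shows "\<bar>Gd H1 H2 \<theta>\<bar> \<le> M \<theta> * \<Phi> \<epsilon> k"
proof -
  have eps0: "0 \<le> \<epsilon>" using e[of 0] by linarith
  obtain d where db: "\<And>j. \<bar>d j\<bar> \<le> M \<theta> / r^j"
    and rb: "\<And>s. 0 \<le> s \<Longrightarrow> s \<le> sU \<Longrightarrow>
        \<bar>(1 - s) powr (- \<kappa>) * exp (- \<theta> * s / (1 - s)) - (\<Sum>j<k. d j * s^j)\<bar>
          \<le> M \<theta> * (sU / r)^k / (1 - sU / r)"
    using psi_expansion[OF k0 th cst(1) cst(2) _ cst(3), of k] basic unfolding M_def by auto
  define Rm where "Rm = (\<lambda>l. sfun l powr \<kappa> * ((1 - sfun l) powr (- \<kappa>) * exp (- \<theta> * sfun l / (1 - sfun l))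
      - (\<Sum>j<k. d j * sfun l^j)))"
  have Rm_meas: "Rm \<in> borel_measurable borel" unfolding Rm_def sfun_def by measurable
  have Rm_bd: "\<bar>Rm l\<bar> \<le> M \<theta> * q^k / (1 - q)" if l: "L \<le> l" "l \<le> U" for l
  proof -
    have s: "0 \<le> sfun l" "sfun l \<le> sU" "sfun l \<le> 1" using sfun_bd[OF l] basic by auto
    have "\<bar>Rm l\<bar> = sfun l powr \<kappa> * \<bar>(1 - sfun l) powr (- \<kappa>) * exp (- \<theta> * sfun l / (1 - sfun l))
      - (\<Sum>j<k. d j * sfun l^j)\<bar>" unfolding Rm_def by (simp add: abs_mult)
    also have "\<dots> \<le> 1 * (M \<theta> * (sU / r)^k / (1 - sU / r))"
      using rb[OF s(1,2)] s k0 by (intro mult_mono powr_le1) auto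
    finally show ?thesis by (simp add: q_def)
  qed
  have Rm_int: "integrable H Rm" if H: "prob_on L U H" for H
    by (rule integrable_on_LU[OF H Rm_meas Rm_bd])
  have expand: "(\<integral>l. l powr \<kappa> * exp (- l * \<theta>) \<partial>H) = (\<Sum>j<k. d j * Bm H j) + integral\<^sup>L H Rm"
    if H: "prob_on L U H" for H
  proof -
    have "(\<integral>l. l powr \<kappa> * exp (- l * \<theta>) \<partial>H) = (\<integral>l. (\<Sum>j<k. d j * (sfun l powr \<kappa> * sfun l ^ j)) + Rm l \<partial>H)"
    proof (rule integral_cong_LU[OF H])
      show "(\<lambda>l. l powr \<kappa> * exp (- l * \<theta>)) \<in> borel_measurable borel" by measurable
      show "(\<lambda>l. (\<Sum>j<k. d j * (sfun l powr \<kappa> * sfun l ^ j)) + Rm l) \<in> borel_measurable borel"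
        using Rm_meas unfolding sfun_def by measurable
      fix l assume l: "L \<le> l" "l \<le> U"
      show "l powr \<kappa> * exp (- l * \<theta>) = (\<Sum>j<k. d j * (sfun l powr \<kappa> * sfun l ^ j)) + Rm l"
        unfolding Rm_def lk_identity[OF l(1), of \<theta>]
        by (simp add: right_diff_distrib sum_distrib_left mult.left_commute)
    qed
    also have "\<dots> = (\<Sum>j<k. d j * Bm H j) + integral\<^sup>L H Rm"
    proof -
      have i1: "integrable H (\<lambda>l. sfun l powr \<kappa> * sfun l ^ j)" for j
      proof (rule integrable_on_LU[OF H meas_Bm, where B=1])
        fix l assume l: "L \<le> l" "l \<le> U"
        have s: "0 \<le> sfun l" "sfun l \<le> 1" using sfun_bd[OF l] basic by auto
        have "sfun l powr \<kappa> * sfun l ^ j \<le> 1 * 1" using s k0 by (intro mult_mono powr_le1 power_le_one) auto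
        thus "\<bar>sfun l powr \<kappa> * sfun l ^ j\<bar> \<le> 1" using s by simp
      qed
      have i2: "integrable H (\<lambda>l. \<Sum>j<k. d j * (sfun l powr \<kappa> * sfun l ^ j))"
        using i1 by auto
      show ?thesis unfolding Bm_def
        by (subst Bochner_Integration.integral_add[OF i2 Rm_int[OF H]])
           (simp add: Bochner_Integration.integral_sum i1 integral_mult_right_zero)
    qed
    finally show ?thesis .
  qed
  have "Gd H1 H2 \<theta> = (\<Sum>j<k. d j * (Bm H1 j - Bm H2 j)) + (integral\<^sup>L H1 Rm - integral\<^sup>L H2 Rm)"
    unfolding Gd_def expand[OF H1] expand[OF H2] by (simp add: sum_subtractf right_diff_distrib)
  also have "\<bar>\<dots>\<bar> \<le> M \<theta> * (\<rho> ^ k * \<epsilon> / mk) + 2 * (M \<theta> * q^k / (1 - q))"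
  proof (rule order_trans[OF abs_triangle_ineq add_mono])
    have "\<bar>\<Sum>j<k. d j * (Bm H1 j - Bm H2 j)\<bar> \<le> (\<Sum>j<k. M \<theta> * ((2 / r) ^ k * (\<epsilon> * k / mk)))"
    proof (rule order_trans[OF sum_abs sum_mono])
      fix j assume j: "j \<in> {..<k}"
      have "\<bar>d j * (Bm H1 j - Bm H2 j)\<bar> \<le> (M \<theta> / r^j) * (2 ^ j * (\<epsilon> * (j + 1) / mk))"
        unfolding abs_mult using M_pos[of \<theta>] cst(1) by (intro mult_mono db Bm_diff[OF H1 H2 e]) auto
      also have "\<dots> = M \<theta> * ((2 / r) ^ j * (\<epsilon> * (j + 1) / mk))" by (simp add: power_divide)
      also have "\<dots> \<le> M \<theta> * ((2 / r) ^ k * (\<epsilon> * k / mk))"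
        using j M_pos[of \<theta>] cst eps0
        by (intro mult_left_mono mult_mono power_increasing divide_right_mono) auto
      finally show "\<bar>d j * (Bm H1 j - Bm H2 j)\<bar> \<le> M \<theta> * ((2 / r) ^ k * (\<epsilon> * k / mk))" .
    qed
    also have "\<dots> = M \<theta> * ((real k * real k) * (2 / r) ^ k * \<epsilon> / mk)" by simp
    also have "\<dots> \<le> M \<theta> * (4 ^ k * (2 / r) ^ k * \<epsilon> / mk)"
      using M_pos[of \<theta>] cst eps0 sq_le_4pow[of k]
      by (intro mult_left_mono divide_right_mono mult_right_mono) auto
    also have "\<dots> = M \<theta> * (\<rho> ^ k * \<epsilon> / mk)" by (simp add: \<rho>_def power_mult_distrib[symmetric])
    finally show "\<bar>\<Sum>j<k. d j * (Bm H1 j - Bm H2 j)\<bar> \<le> M \<theta> * (\<rho> ^ k * \<epsilon> / mk)" .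
    have "\<bar>integral\<^sup>L H Rm\<bar> \<le> M \<theta> * q^k / (1 - q)" if "prob_on L U H" for H
      by (rule integral_abs_LU[OF that Rm_meas Rm_bd])
    from this[OF H1] this[OF H2]
    show "\<bar>integral\<^sup>L H1 Rm - integral\<^sup>L H2 Rm\<bar> \<le> 2 * (M \<theta> * q^k / (1 - q))" by linarith
  qed
  also have "\<dots> = M \<theta> * \<Phi> \<epsilon> k" by (simp add: \<Phi>_def algebra_simps)
  finally show ?thesis .
qed

definition "K0 = (1 - r) powr (- \<kappa> * \<beta>) * U powr (\<kappa> * (1 - \<beta>))"

lemma beta: "0 < \<beta>" "\<beta> < 1/2" "\<beta> < 1" "\<beta> * (1 + L) = L / 2"
  using L0 unfolding \<beta>_def by (auto simp: field_simps)

lemma K0_pos: "K0 > 0" unfolding K0_def using cst L0 LU by simp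

lemma Phi_nn: "\<epsilon> \<ge> 0 \<Longrightarrow> \<Phi> \<epsilon> k \<ge> 0"
  unfolding \<Phi>_def using cst by (intro add_nonneg_nonneg) auto

lemma G_exp: assumes H1: "prob_on L U H1" and H2: "prob_on L U H2" and th: "\<theta> \<ge> 0"
  shows "\<bar>Gd H1 H2 \<theta>\<bar> \<le> U powr \<kappa> * exp (- L * \<theta>)"
proof -
  have b: "0 \<le> l powr \<kappa> * exp (- l * \<theta>) \<and> l powr \<kappa> * exp (- l * \<theta>) \<le> U powr \<kappa> * exp (- L * \<theta>)"
    if "L \<le> l" "l \<le> U" for l
    using that L0 th k0 by (auto intro!: mult_mono powr_mono2 mult_right_mono)
  have m: "(\<lambda>l. l powr \<kappa> * exp (- l * \<theta>)) \<in> borel_measurable borel" by measurable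
  have "0 \<le> (\<integral>l. l powr \<kappa> * exp (- l * \<theta>) \<partial>H) \<and> (\<integral>l. l powr \<kappa> * exp (- l * \<theta>) \<partial>H) \<le> U powr \<kappa> * exp (- L * \<theta>)"
    if H: "prob_on L U H" for H
  proof -
    have i: "integrable H (\<lambda>l. l powr \<kappa> * exp (- l * \<theta>))"
      by (rule integrable_on_LU[OF H m, where B="U powr \<kappa> * exp (- L * \<theta>)"]) (use b in auto)
    show ?thesis using integral_lower_LU[OF H i, of 0] integral_upper_LU[OF H i, of "U powr \<kappa> * exp (- L * \<theta>)"] b
      by auto
  qed
  from this[OF H1] this[OF H2] show ?thesis unfolding Gd_def by linarith
qed

lemma G_final: assumes H1: "prob_on L U H1" and H2: "prob_on L U H2" and th: "\<theta> \<ge> 0"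
  and e: "\<And>i. \<bar>fH \<kappa> H1 i - fH \<kappa> H2 i\<bar> \<le> \<epsilon>"
  shows "\<bar>Gd H1 H2 \<theta>\<bar> \<le> K0 * \<Phi> \<epsilon> k powr \<beta> * exp (- (L / 2) * \<theta>)"
proof -
  have eps0: "0 \<le> \<epsilon>" using e[of 0] by linarith
  have P: "\<Phi> \<epsilon> k \<ge> 0" by (rule Phi_nn[OF eps0])
  have "\<bar>Gd H1 H2 \<theta>\<bar> \<le> (M \<theta> * \<Phi> \<epsilon> k) powr \<beta> * (U powr \<kappa> * exp (- L * \<theta>)) powr (1 - \<beta>)"
    by (rule interp_le[OF abs_ge_zero G_poly[OF H1 H2 th e] G_exp[OF H1 H2 th] beta(1) beta(3)])
  also have "\<dots> = ((1 - r) powr (- \<kappa> * \<beta>) * U powr (\<kappa> * (1 - \<beta>))) * \<Phi> \<epsilon> k powr \<beta> *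
      (exp (\<theta> * \<beta>) * exp (- L * \<theta> * (1 - \<beta>)))"
    using P M_pos[of \<theta>] cst L0 LU
    by (simp add: powr_mult M_def powr_powr exp_powr_real mult_ac)
  also have "exp (\<theta> * \<beta>) * exp (- L * \<theta> * (1 - \<beta>)) = exp (- (L / 2) * \<theta>)"
  proof -
    have "\<theta> * \<beta> + (- L * \<theta> * (1 - \<beta>)) = \<theta> * (\<beta> * (1 + L)) - L * \<theta>" by (simp add: algebra_simps)
    also have "\<dots> = - (L / 2) * \<theta>" by (subst beta(4)) (simp add: field_simps)
    finally show ?thesis by (simp flip: exp_add)
  qed
  finally show ?thesis by (simp add: K0_def)
qed

lemma gH_eq: "gH \<kappa> H \<theta> = \<theta> powr (\<kappa> - 1) / Gamma \<kappa> * (\<integral>l. l powr \<kappa> * exp (- l * \<theta>) \<partial>H)"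
proof -
  have "gH \<kappa> H \<theta> = (\<integral>l. \<theta> powr (\<kappa> - 1) / Gamma \<kappa> * (l powr \<kappa> * exp (- l * \<theta>)) \<partial>H)"
    unfolding gH_def by (rule Bochner_Integration.integral_cong) (simp_all add: field_simps)
  thus ?thesis by simp
qed

lemma TV_det: assumes H1: "prob_on L U H1" and H2: "prob_on L U H2"
  and e: "\<And>i. \<bar>fH \<kappa> H1 i - fH \<kappa> H2 i\<bar> \<le> \<epsilon>"
  shows "TV (gH \<kappa> H1) (gH \<kappa> H2) \<le> 1/2 * K0 * (2 / L) powr \<kappa> * \<Phi> \<epsilon> k powr \<beta>"
proof -
  define C where "C = K0 * \<Phi> \<epsilon> k powr \<beta> / Gamma \<kappa>"
  have C0: "C \<ge> 0" unfolding C_def using K0_pos Gamma_real_pos[OF k0] by simp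
  have L2: "L / 2 > 0" using L0 by simp
  have bd: "\<bar>gH \<kappa> H1 \<theta> - gH \<kappa> H2 \<theta>\<bar> \<le> C * (\<theta> powr (\<kappa> - 1) * exp (- (L / 2) * \<theta>))"
    if th: "\<theta> \<in> {0<..}" for \<theta>
  proof -
    have "\<bar>gH \<kappa> H1 \<theta> - gH \<kappa> H2 \<theta>\<bar> = \<theta> powr (\<kappa> - 1) / Gamma \<kappa> * \<bar>Gd H1 H2 \<theta>\<bar>"
    proof -
      have "gH \<kappa> H1 \<theta> - gH \<kappa> H2 \<theta> = \<theta> powr (\<kappa> - 1) / Gamma \<kappa> * Gd H1 H2 \<theta>"
        unfolding gH_eq Gd_def by (simp only: right_diff_distrib)
      moreover have "\<theta> powr (\<kappa> - 1) / Gamma \<kappa> \<ge> 0" using Gamma_real_pos[OF k0] by simp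
      ultimately show ?thesis using Gamma_real_pos[OF k0] by (simp add: abs_mult)
    qed
    also have "\<dots> \<le> \<theta> powr (\<kappa> - 1) / Gamma \<kappa> * (K0 * \<Phi> \<epsilon> k powr \<beta> * exp (- (L / 2) * \<theta>))"
      using Gamma_real_pos[OF k0] th by (intro mult_left_mono G_final[OF H1 H2 _ e]) auto
    also have "\<dots> = C * (\<theta> powr (\<kappa> - 1) * exp (- (L / 2) * \<theta>))" unfolding C_def by simp
    finally show ?thesis .
  qed
  have si: "set_integrable lborel {0<..} (\<lambda>\<theta>. C * (\<theta> powr (\<kappa> - 1) * exp (- (L / 2) * \<theta>)))"
    using gamma_scaled(1)[OF L2 k0] by (rule set_integrable_mult_right)
  have "(LINT \<theta>:{0<..}|lborel. \<bar>gH \<kappa> H1 \<theta> - gH \<kappa> H2 \<theta>\<bar>) \<le> (LINT \<theta>:{0<..}|lborel. C * (\<theta> powr (\<kappa> - 1) * exp (- (L / 2) * \<theta>)))"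
  proof (cases "set_integrable lborel {0<..} (\<lambda>\<theta>. \<bar>gH \<kappa> H1 \<theta> - gH \<kappa> H2 \<theta>\<bar>)")
    case True
    show ?thesis by (rule set_integral_mono[OF True si bd])
  next
    case False
    hence "(LINT \<theta>:{0<..}|lborel. \<bar>gH \<kappa> H1 \<theta> - gH \<kappa> H2 \<theta>\<bar>) = 0"
      unfolding set_integrable_def set_lebesgue_integral_def by (rule not_integrable_integral_eq)
    moreover have "0 \<le> (LINT \<theta>:{0<..}|lborel. C * (\<theta> powr (\<kappa> - 1) * exp (- (L / 2) * \<theta>)))"
      unfolding set_lebesgue_integral_def using C0
      by (intro Bochner_Integration.integral_nonneg) (auto simp: indicator_def)
    ultimately show ?thesis by simp
  qed
  also have "\<dots> = C * (Gamma \<kappa> / (L / 2) powr \<kappa>)"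
    using gamma_scaled(2)[OF L2 k0] by (simp add: set_integral_mult_right)
  also have "\<dots> = K0 * (2 / L) powr \<kappa> * \<Phi> \<epsilon> k powr \<beta>"
    unfolding C_def using Gamma_real_pos[OF k0] L0 by (simp add: powr_divide field_simps)
  finally show ?thesis unfolding TV_def by simp
qed

end


definition phat :: "nat list \<Rightarrow> nat \<Rightarrow> real" where
  "phat xs x = (\<Sum>i<length xs. if xs ! i = x then 1 else 0) / length xs"

lemma phat_sums: assumes "xs \<noteq> []"
  shows "(\<lambda>x. phat xs x * g x) sums ((\<Sum>i<length xs. g (xs ! i)) / length xs)"
proof -
  have "(\<lambda>x. \<Sum>i<length xs. (\<lambda>i x. if x = xs ! i then g x else 0) i x) sums (\<Sum>i<length xs. g (xs ! i))"
    by (rule sums_sum) (rule sums_single)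
  hence "(\<lambda>x. (\<Sum>i<length xs. (if x = xs ! i then g x else 0)) / length xs) sums ((\<Sum>i<length xs. g (xs ! i)) / length xs)"
    by (rule sums_divide)
  moreover have "(\<Sum>i<length xs. (if x = xs ! i then g x else 0)) / length xs = phat xs x * g x" for x
  proof -
    have "(\<Sum>i<length xs. (if x = xs ! i then g x else 0)) = (\<Sum>i<length xs. if xs ! i = x then 1 else 0) * g x"
      by (subst sum_distrib_right) (rule sum.cong, auto)
    thus ?thesis unfolding phat_def by simp
  qed
  ultimately show ?thesis by simp
qed

lemma phat_nonneg: "phat xs x \<ge> 0" unfolding phat_def by (auto intro!: sum_nonneg divide_nonneg_nonneg)

lemma phat_summable: assumes "xs \<noteq> []" shows "summable (\<lambda>x. phat xs x * g x)"
  using phat_sums[OF assms] by (rule sums_summable)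

lemma hel_ineq: fixes a b :: real assumes a: "a > 0" and b: "b > 0"
  shows "b * (ln a - ln b) \<le> a - b - (sqrt a - sqrt b)^2"
proof -
  have sa: "sqrt a > 0" "sqrt b > 0" using a b by auto
  have "ln a - ln b = 2 * ln (sqrt a / sqrt b)"
    using a b by (simp add: ln_div ln_sqrt)
  also have "\<dots> \<le> 2 * (sqrt a / sqrt b - 1)"
    using sa by (intro mult_left_mono ln_le_minus_one) auto
  finally have "b * (ln a - ln b) \<le> b * (2 * (sqrt a / sqrt b - 1))" using b by (intro mult_left_mono) auto
  also have "\<dots> = 2 * sqrt a * sqrt b - 2 * b"
  proof -
    have g: "t^2 * (2 * (x / t - 1)) = 2 * x * t - 2 * t^2" if "t > 0" for t x :: real
      using that by (simp add: field_simps power2_eq_square)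
    have "b = (sqrt b)^2" using b by simp
    thus ?thesis using g[OF sa(2), of "sqrt a"] by (metis power2_eq_square)
  qed
  also have "\<dots> = a - b - (sqrt a - sqrt b)^2"
    using a b by (simp add: power2_eq_square algebra_simps)
  finally show ?thesis .
qed

context LUk begin

definition "A\<kappa> = - \<kappa> * ln sL"
definition "Bc = ln (tL / tU)"
definition "\<omega> = tL powr (1/8)"
definition "D = A\<kappa> + Bc / (1 / \<omega> - 1)"
definition "w x = D * (1 / \<omega>) ^ x"

lemma omega: "0 < \<omega>" "\<omega> < 1" "\<omega> ^ 8 = tL"
proof -
  show "0 < \<omega>" unfolding \<omega>_def using basic by simp
  have "tL powr (1/8) < 1 powr (1/8)" using basic by (intro powr_less_mono2) auto
  thus "\<omega> < 1" unfolding \<omega>_def by simp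
  have "(tL powr (1/8)) ^ 8 = (tL powr (1/8)) powr (real 8)" using basic by (subst powr_realpow) auto
  also have "\<dots> = tL" using basic by (simp add: powr_powr)
  finally show "\<omega> ^ 8 = tL" unfolding \<omega>_def .
qed

lemma AB: "A\<kappa> \<ge> 0" "Bc > 0"
proof -
  have "ln sL < 0" using basic by simp
  thus "A\<kappa> \<ge> 0" unfolding A\<kappa>_def using k0 by (simp add: mult_nonneg_nonpos)
  have "tL / tU > 1" using basic by simp
  thus "Bc > 0" unfolding Bc_def by simp
qed

lemma w_bound: "A\<kappa> + Bc * x \<le> w x"
proof -
  define \<delta> where "\<delta> = 1 / \<omega> - 1"
  have d0: "\<delta> > 0" unfolding \<delta>_def using omega by simp
  have "1 + real x * \<delta> \<le> (1 + \<delta>) ^ x" using d0 by (intro Bernoulli_inequality) simp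
  hence x: "real x \<le> (1 + \<delta>) ^ x / \<delta>" using d0 by (simp add: field_simps)
  have p1: "1 \<le> (1 + \<delta>) ^ x" using d0 by simp
  have "A\<kappa> + Bc * x \<le> A\<kappa> * (1 + \<delta>) ^ x + Bc * ((1 + \<delta>) ^ x / \<delta>)"
  proof (rule add_mono)
    show "A\<kappa> \<le> A\<kappa> * (1 + \<delta>) ^ x" using AB p1 mult_left_mono[of 1 "(1 + \<delta>) ^ x" A\<kappa>] by simp
    show "Bc * x \<le> Bc * ((1 + \<delta>) ^ x / \<delta>)" using AB x by (intro mult_left_mono) auto
  qed
  also have "\<dots> = (A\<kappa> + Bc / \<delta>) * (1 + \<delta>) ^ x" by (simp add: algebra_simps)
  also have "\<dots> = w x" unfolding w_def D_def \<delta>_def by simp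
  finally show ?thesis .
qed

lemma w_nonneg: "w x \<ge> 0"
proof -
  have "1 / \<omega> - 1 > 0" using omega by simp
  hence "D \<ge> 0" unfolding D_def using AB by (intro add_nonneg_nonneg divide_nonneg_pos) auto
  thus ?thesis unfolding w_def using omega by simp
qed

lemma lr_bound: assumes H1: "prob_on L U H1" and H2: "prob_on L U H2"
  shows "\<bar>ln (fH \<kappa> H1 x) - ln (fH \<kappa> H2 x)\<bar> \<le> w x"
proof -
  have one: "ln (fH \<kappa> H1 x) - ln (fH \<kappa> H2 x) \<le> A\<kappa> + Bc * x"
    if H1: "prob_on L U H1" and H2: "prob_on L U H2" for H1 H2
  proof -
    have c: "cc \<kappa> x > 0" by (rule cc_pos[OF k0])
    have "ln (fH \<kappa> H1 x) \<le> ln (cc \<kappa> x * tL ^ x)"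
      using fH_bounds[OF H1 k0, of x] by (subst ln_le_cancel_iff) auto
    also have "\<dots> = ln (cc \<kappa> x) + x * ln tL" using c basic by (simp add: ln_mult ln_realpow)
    finally have u: "ln (fH \<kappa> H1 x) \<le> ln (cc \<kappa> x) + x * ln tL" .
    have "ln (cc \<kappa> x) + x * ln tU + \<kappa> * ln sL = ln (cc \<kappa> x * (tU ^ x * sL powr \<kappa>))"
      using c basic by (simp add: ln_mult ln_realpow ln_powr)
    also have "\<dots> \<le> ln (fH \<kappa> H2 x)"
      using fH_bounds[OF H2 k0, of x] c basic by (subst ln_le_cancel_iff) auto
    finally have l: "ln (cc \<kappa> x) + x * ln tU + \<kappa> * ln sL \<le> ln (fH \<kappa> H2 x)" .
    have "Bc = ln tL - ln tU" unfolding Bc_def using basic by (simp add: ln_div)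
    hence "real x * Bc = real x * ln tL - real x * ln tU" by (simp add: right_diff_distrib)
    moreover have "Bc * real x = real x * Bc" "- \<kappa> * ln sL = - (\<kappa> * ln sL)" by simp_all
    ultimately show ?thesis using u l unfolding A\<kappa>_def by linarith
  qed
  from one[OF H1 H2] one[OF H2 H1] w_bound[of x] show ?thesis by linarith
qed

lemma fw_summable: assumes H: "prob_on L U H" shows "summable (\<lambda>x. fH \<kappa> H x * w x)"
proof (rule summable_comparison_test'[where g="\<lambda>x. D * (cc \<kappa> x * (\<omega> ^ 7) ^ x)"])
  have "summable (\<lambda>x. cc \<kappa> x * (\<omega> ^ 7) ^ x)"
    using nb_sums[OF k0, of "\<omega> ^ 7"] omega by (auto intro: sums_summable simp: power_less_one_iff)
  thus "summable (\<lambda>x. D * (cc \<kappa> x * (\<omega> ^ 7) ^ x))" by (rule summable_mult)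
  fix x
  have "norm (fH \<kappa> H x * w x) = fH \<kappa> H x * w x" using fH_bounds(3)[OF H k0, of x] w_nonneg[of x] by simp
  also have "\<dots> \<le> cc \<kappa> x * tL ^ x * w x" using fH_bounds(2)[OF H k0, of x] w_nonneg[of x] by (intro mult_right_mono) auto
  also have "\<dots> = D * (cc \<kappa> x * (tL ^ x * (1 / \<omega>) ^ x))"
    unfolding w_def by (simp add: mult_ac)
  also have "tL ^ x * (1 / \<omega>) ^ x = (\<omega> ^ 7) ^ x"
  proof -
    have e8: "tL = \<omega> ^ 7 * \<omega>" unfolding omega(3)[symmetric] by (simp add: eval_nat_numeral)
    have "tL * (1 / \<omega>) = \<omega> ^ 7" unfolding e8 using omega(1) by simp
    thus ?thesis by (simp add: power_mult_distrib[symmetric])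
  qed
  finally show "norm (fH \<kappa> H x * w x) \<le> D * (cc \<kappa> x * (\<omega> ^ 7) ^ x)" .
qed

definition "Z xs Hs = (\<Sum>x. \<bar>phat xs x - fH \<kappa> Hs x\<bar> * w x)"

lemma S1: assumes ne: "xs \<noteq> []" and np: "is_npmle \<kappa> L U xs Hh" and Hs: "prob_on L U Hs"
  shows "\<bar>fH \<kappa> Hh i - fH \<kappa> Hs i\<bar> \<le> 2 * sqrt (Z xs Hs)"
proof -
  have Hh: "prob_on L U Hh" using np unfolding is_npmle_def by simp
  define f1 where "f1 = fH \<kappa> Hh"
  define f2 where "f2 = fH \<kappa> Hs"
  define lr where "lr x = ln (f1 x) - ln (f2 x)" for x
  define n where "n = length xs"
  have f1p: "f1 x > 0" "f1 x \<le> 1" for x unfolding f1_def using fH_bounds(3)[OF Hh k0] fH_le1[OF Hh k0] by auto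
  have f2p: "f2 x > 0" "f2 x \<le> 1" for x unfolding f2_def using fH_bounds(3)[OF Hs k0] fH_le1[OF Hs k0] by auto
  have lb: "\<bar>lr x\<bar> \<le> w x" for x unfolding lr_def f1_def f2_def by (rule lr_bound[OF Hh Hs])
  have "loglik \<kappa> Hs xs \<le> loglik \<kappa> Hh xs" using np Hs unfolding is_npmle_def by blast
  hence P0: "0 \<le> (\<Sum>i<n. lr (xs ! i))"
    unfolding loglik_def lr_def f1_def f2_def n_def by (simp add: sum_subtractf)
  define P where "P = (\<Sum>i<n. lr (xs ! i)) / n"
  have P0': "P \<ge> 0" unfolding P_def using P0 by simp
  have sP: "(\<lambda>x. phat xs x * lr x) sums P" unfolding P_def n_def by (rule phat_sums[OF ne])
  have sw2: "summable (\<lambda>x. f2 x * w x)" unfolding f2_def by (rule fw_summable[OF Hs])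
  have sS: "summable (\<lambda>x. f2 x * lr x)"
    by (rule summable_comparison_test'[OF sw2]) (use lb f2p in \<open>auto simp: abs_mult abs_of_pos intro: mult_left_mono\<close>)
  define S where "S = (\<Sum>x. f2 x * lr x)"
  have sS': "(\<lambda>x. f2 x * lr x) sums S" unfolding S_def using sS by (simp add: summable_sums)
  have s1: "f1 sums 1" unfolding f1_def by (rule fH_sums[OF Hh k0])
  have s2: "f2 sums 1" unfolding f2_def by (rule fH_sums[OF Hs k0])
  define hel where "hel x = (sqrt (f1 x) - sqrt (f2 x))^2" for x
  have hs: "summable hel"
  proof (rule summable_comparison_test'[where g="\<lambda>x. f1 x + f2 x"])
    show "summable (\<lambda>x. f1 x + f2 x)" using s1 s2 by (intro summable_add sums_summable) auto
    fix x
    have "(sqrt (f1 x) - sqrt (f2 x))^2 \<le> f1 x + f2 x"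
      using f1p[of x] f2p[of x] by (simp add: power2_eq_square algebra_simps)
    thus "norm (hel x) \<le> f1 x + f2 x" unfolding hel_def by simp
  qed
  define Hel where "Hel = suminf hel"
  have hs': "hel sums Hel" unfolding Hel_def using hs by (simp add: summable_sums)
  have "S \<le> 1 - 1 - Hel"
  proof (rule sums_le[OF _ sS'])
    show "(\<lambda>x. f1 x - f2 x - hel x) sums (1 - 1 - Hel)" by (intro sums_diff s1 s2 hs')
    show "f2 x * lr x \<le> f1 x - f2 x - hel x" for x
      unfolding lr_def hel_def by (rule hel_ineq[OF f1p(1) f2p(1)])
  qed
  hence SH: "Hel \<le> - S" by simp
  have sZ: "(\<lambda>x. \<bar>phat xs x - f2 x\<bar> * w x) sums Z xs Hs"
  proof -
    have "summable (\<lambda>x. \<bar>phat xs x - f2 x\<bar> * w x)"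
    proof (rule summable_comparison_test'[where g="\<lambda>x. phat xs x * w x + f2 x * w x"])
      show "summable (\<lambda>x. phat xs x * w x + f2 x * w x)" by (intro summable_add phat_summable[OF ne] sw2)
      fix x show "norm (\<bar>phat xs x - f2 x\<bar> * w x) \<le> phat xs x * w x + f2 x * w x"
        using phat_nonneg[of xs x] f2p[of x] w_nonneg[of x]
        by (simp add: abs_mult distrib_right[symmetric] mult_right_mono)
    qed
    thus ?thesis unfolding Z_def f2_def by (simp add: summable_sums)
  qed
  have "P - S \<le> Z xs Hs"
  proof (rule sums_le[OF _ _ sZ])
    show "(\<lambda>x. phat xs x * lr x - f2 x * lr x) sums (P - S)" by (intro sums_diff sP sS')
    fix x
    have "phat xs x * lr x - f2 x * lr x = (phat xs x - f2 x) * lr x" by (simp add: algebra_simps)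
    also have "\<dots> \<le> \<bar>phat xs x - f2 x\<bar> * \<bar>lr x\<bar>" by (simp add: abs_mult[symmetric])
    also have "\<dots> \<le> \<bar>phat xs x - f2 x\<bar> * w x" by (intro mult_left_mono lb) auto
    finally show "phat xs x * lr x - f2 x * lr x \<le> \<bar>phat xs x - f2 x\<bar> * w x" .
  qed
  hence HZ: "Hel \<le> Z xs Hs" using SH P0' by linarith
  have "hel i \<le> Hel"
    unfolding Hel_def using sum_le_suminf[OF hs, of "{i}"] by (simp add: hel_def)
  hence "sqrt (hel i) \<le> sqrt (Z xs Hs)" using HZ by simp
  hence d: "\<bar>sqrt (f1 i) - sqrt (f2 i)\<bar> \<le> sqrt (Z xs Hs)" unfolding hel_def by simp
  have "\<bar>f1 i - f2 i\<bar> = \<bar>sqrt (f1 i) - sqrt (f2 i)\<bar> * (sqrt (f1 i) + sqrt (f2 i))"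
  proof -
    have "f1 i - f2 i = (sqrt (f1 i) - sqrt (f2 i)) * (sqrt (f1 i) + sqrt (f2 i))"
      using f1p[of i] f2p[of i] by (simp add: algebra_simps)
    moreover have "\<bar>sqrt (f1 i) + sqrt (f2 i)\<bar> = sqrt (f1 i) + sqrt (f2 i)" using f1p[of i] f2p[of i] by simp
    ultimately show ?thesis by (simp add: abs_mult)
  qed
  also have "\<dots> \<le> sqrt (Z xs Hs) * 2"
  proof -
    have a: "sqrt (f1 i) \<le> 1" "sqrt (f2 i) \<le> 1" using f1p[of i] f2p[of i] by auto
    have b: "sqrt (f1 i) + sqrt (f2 i) \<le> 2" using a by linarith
    have c: "0 \<le> sqrt (Z xs Hs)" using d by linarith
    show ?thesis by (rule mult_mono[OF d b c]) (use f1p[of i] f2p[of i] in simp)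
  qed
  finally show ?thesis unfolding f1_def f2_def by simp
qed

end


lemma replicate_pmf_Suc': "replicate_pmf (Suc n) p = map_pmf (\<lambda>(x, xs). x # xs) (pair_pmf p (replicate_pmf n p))"
  by (simp add: pair_pmf_def map_pmf_def bind_assoc_pmf bind_return_pmf)

lemma inj_Cons_pair: "inj (\<lambda>(x::'a, xs). x # xs)"
  by (auto simp: inj_def)

lemma pmf_replicate: "pmf (replicate_pmf n p) xs = (if length xs = n then (\<Prod>i<n. pmf p (xs ! i)) else 0)"
proof (induction n arbitrary: xs)
  case 0 thus ?case by (simp add: pmf_return indicator_def)
next
  case (Suc n)
  show ?case
  proof (cases xs)
    case Nil
    have "pmf (replicate_pmf (Suc n) p) [] = 0"
      by (simp add: pmf_eq_0_set_pmf set_replicate_pmf)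
    thus ?thesis using Nil by simp
  next
    case (Cons y ys)
    have "pmf (replicate_pmf (Suc n) p) xs = pmf (pair_pmf p (replicate_pmf n p)) (y, ys)"
      unfolding replicate_pmf_Suc' Cons using pmf_map_inj'[OF inj_Cons_pair, of _ "(y, ys)"] by simp
    also have "\<dots> = pmf p y * (if length ys = n then (\<Prod>i<n. pmf p (ys ! i)) else 0)"
      by (simp add: pmf_pair Suc.IH)
    also have "\<dots> = (if length xs = Suc n then (\<Prod>i<Suc n. pmf p (xs ! i)) else 0)"
      using Cons by (simp only: prod.lessThan_Suc_shift) simp
    finally show ?thesis .
  qed
qed

lemma marg1: "i < n \<Longrightarrow> map_pmf (\<lambda>xs. xs ! i) (replicate_pmf n p) = p"
proof (induction n arbitrary: i)
  case 0 thus ?case by simp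
next
  case (Suc n)
  show ?case
  proof (cases i)
    case 0
    have "map_pmf (\<lambda>xs. xs ! i) (replicate_pmf (Suc n) p) = map_pmf fst (pair_pmf p (replicate_pmf n p))"
      unfolding replicate_pmf_Suc' map_pmf_comp 0 by (rule map_pmf_cong) auto
    thus ?thesis by (simp add: map_fst_pair_pmf)
  next
    case (Suc i')
    have "map_pmf (\<lambda>xs. xs ! i) (replicate_pmf (Suc n) p) = map_pmf (\<lambda>xs. xs ! i') (map_pmf snd (pair_pmf p (replicate_pmf n p)))"
      unfolding replicate_pmf_Suc' map_pmf_comp Suc by (rule map_pmf_cong) auto
    thus ?thesis using Suc.IH[of i'] Suc.prems Suc by (simp add: map_snd_pair_pmf)
  qed
qed

lemma marg2: "i < n \<Longrightarrow> j < n \<Longrightarrow> i \<noteq> j \<Longrightarrow>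
  map_pmf (\<lambda>xs. (xs ! i, xs ! j)) (replicate_pmf n p) = pair_pmf p p"
proof (induction n arbitrary: i j)
  case 0 thus ?case by simp
next
  case (Suc n)
  show ?case
  proof (cases i)
    case 0
    then obtain j' where j: "j = Suc j'" "j' < n" using Suc.prems by (cases j) auto
    have "map_pmf (\<lambda>xs. (xs ! i, xs ! j)) (replicate_pmf (Suc n) p)
        = map_pmf (\<lambda>(a, b). (id a, b ! j')) (pair_pmf p (replicate_pmf n p))"
      unfolding replicate_pmf_Suc' map_pmf_comp 0 j by (rule map_pmf_cong) auto
    also have "\<dots> = pair_pmf p p" unfolding map_pair using marg1[OF j(2), of p] by (simp add: id_def)
    finally show ?thesis .
  next
    case (Suc i')
    show ?thesis
    proof (cases j)
      case 0
      have i': "i' < n" using Suc.prems Suc by simp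
      have "map_pmf (\<lambda>xs. (xs ! i, xs ! j)) (replicate_pmf (Suc n) p)
          = map_pmf (\<lambda>(a, b). (b, a)) (map_pmf (\<lambda>(a, b). (id a, b ! i')) (pair_pmf p (replicate_pmf n p)))"
        unfolding replicate_pmf_Suc' map_pmf_comp 0 Suc by (rule map_pmf_cong) auto
      also have "\<dots> = map_pmf (\<lambda>(a, b). (b, a)) (pair_pmf p p)" unfolding map_pair using marg1[OF i', of p] by (simp add: id_def)
      also have "\<dots> = pair_pmf p p" by (rule pair_commute_pmf[of p p, symmetric])
      finally show ?thesis .
    next
      case (Suc j')
      have ij: "i' < n" "j' < n" "i' \<noteq> j'" using Suc.prems \<open>i = Suc i'\<close> Suc by auto
      have "map_pmf (\<lambda>xs. (xs ! i, xs ! j)) (replicate_pmf (Suc n) p)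
          = map_pmf (\<lambda>xs. (xs ! i', xs ! j')) (map_pmf snd (pair_pmf p (replicate_pmf n p)))"
        unfolding replicate_pmf_Suc' map_pmf_comp Suc \<open>i = Suc i'\<close> by (rule map_pmf_cong) auto
      thus ?thesis using Suc.IH[OF ij] by (simp add: map_snd_pair_pmf)
    qed
  qed
qed

lemma int_bd: fixes g :: "'a \<Rightarrow> real" assumes "\<And>x. \<bar>g x\<bar> \<le> B" shows "integrable (measure_pmf M) g"
  by (rule measure_pmf.integrable_const_bound[where B=B]) (use assms in auto)

lemma E_ind1: assumes "i < n"
  shows "measure_pmf.expectation (replicate_pmf n p) (\<lambda>xs. if xs ! i = x then 1 else (0::real)) = pmf p x"
proof -
  have "measure_pmf.expectation (replicate_pmf n p) (\<lambda>xs. if xs ! i = x then 1 else (0::real))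
      = measure_pmf.expectation (map_pmf (\<lambda>xs. xs ! i) (replicate_pmf n p)) (indicator {x})"
    unfolding Probability_Mass_Function.integral_map_pmf by (intro Bochner_Integration.integral_cong) (auto simp: indicator_def)
  also have "\<dots> = measure_pmf.expectation p (indicator {x})" by (simp only: marg1[OF assms])
  also have "\<dots> = pmf p x" by (simp add: measure_pmf_single)
  finally show ?thesis .
qed

lemma E_ind2: assumes "i < n" "j < n" "i \<noteq> j"
  shows "measure_pmf.expectation (replicate_pmf n p) (\<lambda>xs. (if xs ! i = x then 1 else 0) * (if xs ! j = x then 1 else (0::real))) = pmf p x * pmf p x"
proof -
  have "measure_pmf.expectation (replicate_pmf n p) (\<lambda>xs. (if xs ! i = x then 1 else 0) * (if xs ! j = x then 1 else (0::real)))
      = measure_pmf.expectation (map_pmf (\<lambda>xs. (xs ! i, xs ! j)) (replicate_pmf n p)) (indicator {(x, x)})"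
    unfolding Probability_Mass_Function.integral_map_pmf by (intro Bochner_Integration.integral_cong) (auto simp: indicator_def)
  also have "\<dots> = measure_pmf.expectation (pair_pmf p p) (indicator {(x, x)})" by (simp only: marg2[OF assms])
  also have "\<dots> = pmf p x * pmf p x" by (simp add: measure_pmf_single pmf_pair)
  finally show ?thesis .
qed

lemma E_ee: assumes "i < n" "j < n"
  shows "measure_pmf.expectation (replicate_pmf n p)
     (\<lambda>xs. ((if xs ! i = x then 1 else 0) - pmf p x) * ((if xs ! j = x then 1 else 0) - pmf p x))
   = (if i = j then pmf p x - pmf p x * pmf p x else 0)"
proof -
  define f where "f = pmf p x"
  define I where "I = (\<lambda>i xs. if xs ! i = x then 1 else (0::real))"
  have iI: "integrable (measure_pmf (replicate_pmf n p)) (I i)" for i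
    by (rule int_bd[where B=1]) (simp add: I_def)
  have iII: "integrable (measure_pmf (replicate_pmf n p)) (\<lambda>xs. I i xs * I j xs)" for i j
    by (rule int_bd[where B=1]) (simp add: I_def)
  have e: "((if xs ! i = x then 1 else 0) - pmf p x) * ((if xs ! j = x then 1 else 0) - pmf p x)
      = I i xs * I j xs - f * I i xs - f * I j xs + f * f" for xs
    unfolding I_def f_def by (simp add: algebra_simps)
  have "measure_pmf.expectation (replicate_pmf n p)
     (\<lambda>xs. ((if xs ! i = x then 1 else 0) - pmf p x) * ((if xs ! j = x then 1 else 0) - pmf p x))
    = measure_pmf.expectation (replicate_pmf n p) (\<lambda>xs. I i xs * I j xs)
      - f * measure_pmf.expectation (replicate_pmf n p) (I i)
      - f * measure_pmf.expectation (replicate_pmf n p) (I j) + f * f"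
    unfolding e using iI iII by (simp add: Bochner_Integration.integral_diff Bochner_Integration.integral_add)
  also have "\<dots> = (if i = j then f - f * f else 0)"
  proof (cases "i = j")
    case True
    have "(\<lambda>xs. I i xs * I j xs) = I i" using True by (auto simp: I_def)
    thus ?thesis using True E_ind1[OF assms(1), of p x] unfolding I_def f_def by simp
  next
    case False
    thus ?thesis using E_ind2[OF assms False, of p x] E_ind1[OF assms(1), of p x] E_ind1[OF assms(2), of p x]
      unfolding I_def f_def by simp
  qed
  finally show ?thesis unfolding f_def .
qed

lemma E_sq: assumes n: "n > 0"
  shows "measure_pmf.expectation (replicate_pmf n p) (\<lambda>xs. (phat xs x - pmf p x)^2) = (pmf p x - pmf p x * pmf p x) / n"
proof -
  define f where "f = pmf p x"
  define ee where "ee = (\<lambda>i xs. (if xs ! i = x then 1 else 0) - f)"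
  have AEn: "AE xs in measure_pmf (replicate_pmf n p). length xs = n"
    by (rule AE_pmfI) (simp add: set_replicate_pmf)
  have "measure_pmf.expectation (replicate_pmf n p) (\<lambda>xs. (phat xs x - f)^2)
      = measure_pmf.expectation (replicate_pmf n p) (\<lambda>xs. (\<Sum>i<n. \<Sum>j<n. ee i xs * ee j xs) / (real n)^2)"
  proof (rule integral_cong_AE)
    show "AE xs in measure_pmf (replicate_pmf n p). (phat xs x - f)^2 = (\<Sum>i<n. \<Sum>j<n. ee i xs * ee j xs) / (real n)^2"
      using AEn
    proof eventually_elim
      case (elim xs)
      have "phat xs x - f = (\<Sum>i<n. ee i xs) / n"
        unfolding phat_def ee_def elim using n by (simp add: sum_subtractf field_simps)
      thus ?case by (simp add: power2_eq_square power_divide sum_product)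
    qed
  qed simp_all
  also have "\<dots> = (\<Sum>i<n. \<Sum>j<n. measure_pmf.expectation (replicate_pmf n p) (\<lambda>xs. ee i xs * ee j xs)) / (real n)^2"
  proof -
    have eb: "\<bar>ee i xs\<bar> \<le> 1" for i xs
      unfolding ee_def f_def using pmf_le_1[of p x] pmf_nonneg[of p x] by auto
    have ii: "integrable (measure_pmf (replicate_pmf n p)) (\<lambda>xs. ee i xs * ee j xs)" for i j
      by (rule int_bd[where B=1]) (use eb in \<open>auto simp: abs_mult intro!: mult_le_one\<close>)
    show ?thesis
      by (simp add: Bochner_Integration.integral_sum ii Bochner_Integration.integrable_sum)
  qed
  also have "\<dots> = (\<Sum>i<n. \<Sum>j<n. (if i = j then f - f * f else 0)) / (real n)^2"
    unfolding ee_def f_def by (intro arg_cong2[where f="(/)"] sum.cong refl E_ee) auto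
  also have "\<dots> = (f - f * f) / n" using n by (simp add: power2_eq_square)
  finally show ?thesis unfolding f_def .
qed

lemma E_abs: assumes n: "n > 0" and f: "pmf p x > 0"
  shows "measure_pmf.expectation (replicate_pmf n p) (\<lambda>xs. \<bar>phat xs x - pmf p x\<bar>) \<le> sqrt (pmf p x / n)"
proof -
  define \<eta> where "\<eta> = sqrt (pmf p x / n)"
  have e0: "\<eta> > 0" unfolding \<eta>_def using n f by simp
  have e2: "\<eta>^2 = pmf p x / n" unfolding \<eta>_def using n f by simp
  have bd: "\<bar>phat xs x - pmf p x\<bar> \<le> ((phat xs x - pmf p x)^2 / \<eta> + \<eta>) / 2" for xs
  proof -
    have "0 \<le> (\<bar>phat xs x - pmf p x\<bar> - \<eta>)^2" by simp
    hence "2 * \<eta> * \<bar>phat xs x - pmf p x\<bar> \<le> (phat xs x - pmf p x)^2 + \<eta>^2"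
      by (simp add: power2_eq_square algebra_simps)
    thus ?thesis using e0 by (simp add: field_simps power2_eq_square)
  qed
  have phb: "phat xs x \<le> 1" for xs
  proof (cases "xs = []")
    case False
    have "(\<Sum>i<length xs. if xs ! i = x then 1 else 0) \<le> (\<Sum>i<length xs. (1::real))" by (intro sum_mono) auto
    thus ?thesis unfolding phat_def using False by simp
  qed (simp add: phat_def)
  have ib: "\<bar>phat xs x - pmf p x\<bar> \<le> 1" for xs using phb[of xs] phat_nonneg[of xs x] pmf_le_1[of p x] pmf_nonneg[of p x] by linarith
  have i1: "integrable (measure_pmf (replicate_pmf n p)) (\<lambda>xs. \<bar>phat xs x - pmf p x\<bar>)"
    by (rule int_bd[where B=1]) (use ib in simp)
  have i2: "integrable (measure_pmf (replicate_pmf n p)) (\<lambda>xs. (phat xs x - pmf p x)^2)"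
  proof (rule int_bd[where B=1])
    fix xs show "\<bar>(phat xs x - pmf p x)^2\<bar> \<le> 1" using ib[of xs] abs_square_le_1[of "phat xs x - pmf p x"] by simp
  qed
  have "measure_pmf.expectation (replicate_pmf n p) (\<lambda>xs. \<bar>phat xs x - pmf p x\<bar>)
     \<le> measure_pmf.expectation (replicate_pmf n p) (\<lambda>xs. ((phat xs x - pmf p x)^2 / \<eta> + \<eta>) / 2)"
    by (rule integral_mono[OF i1 _ bd]) (use i2 in auto)
  also have "\<dots> = ((pmf p x - pmf p x * pmf p x) / n / \<eta> + \<eta>) / 2"
    using i2 E_sq[OF n, of p x] by (simp add: Bochner_Integration.integral_add prob_space_measure_pmf)
  also have "\<dots> \<le> ((pmf p x / n) / \<eta> + \<eta>) / 2"
    using e0 n f by (intro divide_right_mono add_right_mono) auto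
  also have "\<dots> = \<eta>" using e0 by (simp add: e2[symmetric] power2_eq_square)
  finally show ?thesis unfolding \<eta>_def .
qed

lemma EZ: fixes w :: "nat \<Rightarrow> real" and p :: "nat pmf"
  assumes n: "n > 0" and w: "\<And>x. w x \<ge> 0" and f: "\<And>x. pmf p x > 0"
    and s1: "summable (\<lambda>x. pmf p x * w x)" and s2: "summable (\<lambda>x. w x * sqrt (pmf p x))"
  shows "integrable (measure_pmf (replicate_pmf n p)) (\<lambda>xs. \<Sum>x. \<bar>phat xs x - pmf p x\<bar> * w x)"
    "measure_pmf.expectation (replicate_pmf n p) (\<lambda>xs. \<Sum>x. \<bar>phat xs x - pmf p x\<bar> * w x)
       \<le> (\<Sum>x. w x * sqrt (pmf p x)) / sqrt n"
proof -
  define R where "R = measure_pmf (replicate_pmf n p)"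
  define a where "a = (\<lambda>x xs. \<bar>phat xs x - pmf p x\<bar> * w x)"
  have a0: "0 \<le> a x xs" for x xs unfolding a_def using w by simp
  have sa: "summable (\<lambda>x. a x xs)" for xs
  proof -
    have sp: "summable (\<lambda>x. phat xs x * w x)"
    proof (cases "xs = []")
      case True thus ?thesis by (simp add: phat_def)
    qed (rule phat_summable)
    show ?thesis
    proof (rule summable_comparison_test'[where g="\<lambda>x. phat xs x * w x + pmf p x * w x"])
      show "summable (\<lambda>x. phat xs x * w x + pmf p x * w x)" by (intro summable_add sp s1)
      fix x show "norm (a x xs) \<le> phat xs x * w x + pmf p x * w x"
      proof -
        have "\<bar>phat xs x - pmf p x\<bar> \<le> phat xs x + pmf p x" using phat_nonneg[of xs x] pmf_nonneg[of p x] by linarith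
        hence "\<bar>phat xs x - pmf p x\<bar> * w x \<le> (phat xs x + pmf p x) * w x" using w[of x] by (rule mult_right_mono)
        thus ?thesis unfolding a_def using w[of x] by (simp add: abs_mult distrib_right)
      qed
    qed
  qed
  have ia: "integrable R (a x)" for x
  proof -
    have "\<bar>phat xs x - pmf p x\<bar> \<le> 1" for xs
    proof -
      have "phat xs x \<le> 1"
      proof (cases "xs = []")
        case False
        have "(\<Sum>i<length xs. if xs ! i = x then 1 else 0) \<le> (\<Sum>i<length xs. (1::real))" by (intro sum_mono) auto
        thus ?thesis unfolding phat_def using False by simp
      qed (simp add: phat_def)
      thus ?thesis using phat_nonneg[of xs x] pmf_le_1[of p x] pmf_nonneg[of p x] by linarith
    qed
    hence "\<bar>a x xs\<bar> \<le> w x" for xs unfolding a_def using w[of x] mult_right_mono[of "\<bar>phat xs x - pmf p x\<bar>" 1 "w x"]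
      by (simp add: abs_mult)
    thus ?thesis unfolding R_def by (intro int_bd[where B="w x"])
  qed
  have Ea: "integral\<^sup>L R (a x) \<le> w x * sqrt (pmf p x / n)" for x
  proof -
    have "integral\<^sup>L R (a x) = w x * measure_pmf.expectation (replicate_pmf n p) (\<lambda>xs. \<bar>phat xs x - pmf p x\<bar>)"
      unfolding a_def R_def by (simp add: mult.commute)
    also have "\<dots> \<le> w x * sqrt (pmf p x / n)" by (intro mult_left_mono E_abs[OF n f] w)
    finally show ?thesis .
  qed
  have "(\<integral>\<^sup>+xs. ennreal (\<Sum>x. a x xs) \<partial>R) = (\<integral>\<^sup>+xs. (\<Sum>x. ennreal (a x xs)) \<partial>R)"
    by (simp add: suminf_ennreal2[OF a0 sa])
  also have "\<dots> = (\<Sum>x. \<integral>\<^sup>+xs. ennreal (a x xs) \<partial>R)"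
    by (rule nn_integral_suminf) (simp add: R_def)
  also have "\<dots> = (\<Sum>x. ennreal (integral\<^sup>L R (a x)))"
    by (intro suminf_cong nn_integral_eq_integral ia) (simp add: a0)
  also have "\<dots> \<le> (\<Sum>x. ennreal (w x * sqrt (pmf p x) / sqrt n))"
  proof (intro suminf_le summableI)
    fix x
    have "w x * sqrt (pmf p x / n) = w x * sqrt (pmf p x) / sqrt n" by (simp add: real_sqrt_divide)
    thus "ennreal (integral\<^sup>L R (a x)) \<le> ennreal (w x * sqrt (pmf p x) / sqrt n)" using Ea[of x] by (simp add: ennreal_leI)
  qed
  also have "\<dots> = ennreal (\<Sum>x. w x * sqrt (pmf p x) / sqrt n)"
    by (rule suminf_ennreal2) (use w s2 in \<open>auto intro: summable_divide\<close>)
  finally have nn: "(\<integral>\<^sup>+xs. ennreal (\<Sum>x. a x xs) \<partial>R) \<le> ennreal ((\<Sum>x. w x * sqrt (pmf p x)) / sqrt n)"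
    using suminf_divide[OF s2, of "sqrt n"] by simp
  have Z0: "0 \<le> (\<Sum>x. a x xs)" for xs by (intro suminf_nonneg sa a0)
  show I: "integrable (measure_pmf (replicate_pmf n p)) (\<lambda>xs. \<Sum>x. \<bar>phat xs x - pmf p x\<bar> * w x)"
  proof -
    have "integrable R (\<lambda>xs. \<Sum>x. a x xs)"
    proof (rule integrableI_nonneg)
      show "(\<lambda>xs. \<Sum>x. a x xs) \<in> borel_measurable R" by (simp add: R_def)
      show "AE xs in R. 0 \<le> (\<Sum>x. a x xs)" using Z0 by simp
      show "(\<integral>\<^sup>+xs. ennreal (\<Sum>x. a x xs) \<partial>R) < \<infinity>" using nn by (rule le_less_trans) simp
    qed
    thus ?thesis unfolding R_def a_def .
  qed
  have "integral\<^sup>L R (\<lambda>xs. \<Sum>x. a x xs) = enn2real (\<integral>\<^sup>+xs. ennreal (\<Sum>x. a x xs) \<partial>R)"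
    by (rule integral_eq_nn_integral) (auto simp: R_def Z0)
  also have "\<dots> \<le> (\<Sum>x. w x * sqrt (pmf p x)) / sqrt n"
    by (rule enn2real_leI[OF _ nn]) (use w in \<open>auto intro!: suminf_nonneg s2 divide_nonneg_nonneg\<close>)
  finally show "measure_pmf.expectation (replicate_pmf n p) (\<lambda>xs. \<Sum>x. \<bar>phat xs x - pmf p x\<bar> * w x)
       \<le> (\<Sum>x. w x * sqrt (pmf p x)) / sqrt n" unfolding R_def a_def .
qed

lemma expect_le: fixes F G :: "'a list \<Rightarrow> real"
  assumes FG: "\<And>xs. length xs = n \<Longrightarrow> 0 \<le> F xs \<and> F xs \<le> G xs"
    and iG: "integrable (measure_pmf (replicate_pmf n p)) G"
  shows "infsum (\<lambda>xs. (\<Prod>i<n. pmf p (xs ! i)) * F xs) {xs. length xs = n}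
    \<le> measure_pmf.expectation (replicate_pmf n p) G"
proof -
  define R where "R = replicate_pmf n p"
  define h where "h = (\<lambda>xs. pmf R xs * G xs)"
  have ih: "integrable (count_space UNIV) h"
    using iG unfolding h_def R_def by (simp add: measure_pmf_eq_density integrable_density)
  have Eh: "measure_pmf.expectation R G = integral\<^sup>L (count_space UNIV) h"
    unfolding h_def by (simp add: measure_pmf_eq_density integral_density)
  have as: "Infinite_Set_Sum.abs_summable_on h UNIV" using ih by (simp add: Infinite_Set_Sum.abs_summable_on_def)
  have hinf: "infsum h UNIV = integral\<^sup>L (count_space UNIV) h"
    using infsetsum_infsum[OF as] by (simp add: infsetsum_def)
  have hs: "h summable_on UNIV"
    using as abs_summable_equivalent abs_summable_summable by blast
  have G0: "0 \<le> measure_pmf.expectation R G"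
  proof (rule integral_nonneg_AE)
    show "AE xs in measure_pmf R. 0 \<le> G xs"
    proof (rule AE_pmfI)
      fix xs assume "xs \<in> set_pmf R"
      hence "length xs = n" by (simp add: R_def set_replicate_pmf)
      from FG[OF this] show "0 \<le> G xs" by linarith
    qed
  qed
  have pr: "pmf R xs = (\<Prod>i<n. pmf p (xs ! i))" if "length xs = n" for xs
    unfolding R_def pmf_replicate using that by simp
  show ?thesis
  proof (cases "(\<lambda>xs. (\<Prod>i<n. pmf p (xs ! i)) * F xs) summable_on {xs. length xs = n}")
    case True
    have "infsum (\<lambda>xs. (\<Prod>i<n. pmf p (xs ! i)) * F xs) {xs. length xs = n} \<le> infsum h UNIV"
    proof (rule infsum_mono_neutral[OF True hs])
      fix xs :: "'a list" assume "xs \<in> {xs. length xs = n} \<inter> UNIV"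
      hence l: "length xs = n" by simp
      show "(\<Prod>i<n. pmf p (xs ! i)) * F xs \<le> h xs"
        unfolding h_def pr[OF l, symmetric] using FG[OF l] by (intro mult_left_mono) auto
    next
      fix xs :: "'a list" assume "xs \<in> UNIV - {xs. length xs = n}"
      hence "pmf R xs = 0" unfolding R_def pmf_replicate by simp
      thus "0 \<le> h xs" unfolding h_def by simp
    qed simp
    thus ?thesis unfolding R_def[symmetric] Eh hinf .
  next
    case False
    thus ?thesis using G0 unfolding R_def by (simp add: infsum_not_exists)
  qed
qed


lemma powr_lin: fixes z \<eta> \<gamma> :: real
  assumes z: "0 \<le> z" and e: "\<eta> > 0" and g: "0 < \<gamma>" "\<gamma> \<le> 1"
  shows "z powr \<gamma> \<le> \<eta> powr \<gamma> + \<eta> powr (\<gamma> - 1) * z"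
proof (cases "z \<le> \<eta>")
  case True
  hence "z powr \<gamma> \<le> \<eta> powr \<gamma>" using z g by (intro powr_mono2) auto
  moreover have "0 \<le> \<eta> powr (\<gamma> - 1) * z" using z by simp
  ultimately show ?thesis by linarith
next
  case False
  hence zp: "z > 0" using e by simp
  have "z powr \<gamma> = z powr (\<gamma> - 1) * z" using zp by (simp add: powr_add[symmetric] powr_diff)
  also have "\<dots> \<le> \<eta> powr (\<gamma> - 1) * z"
    using False e g zp by (intro mult_right_mono powr_mono2') auto
  finally have "z powr \<gamma> \<le> \<eta> powr (\<gamma> - 1) * z" .
  moreover have "0 \<le> \<eta> powr \<gamma>" by simp
  ultimately show ?thesis by linarith
qed

lemma sub_powr: fixes x y \<beta> :: real
  assumes "0 \<le> x" "0 \<le> y" "0 < \<beta>" "\<beta> < 1"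
  shows "(x + y) powr \<beta> \<le> 2 * (x powr \<beta> + y powr \<beta>)"
proof -
  have "(x + y) powr \<beta> \<le> (2 * max x y) powr \<beta>" using assms by (intro powr_mono2) auto
  also have "\<dots> = 2 powr \<beta> * max x y powr \<beta>" using assms by (simp add: powr_mult)
  also have "\<dots> \<le> 2 * (x powr \<beta> + y powr \<beta>)"
  proof (rule mult_mono)
    show "2 powr \<beta> \<le> 2" using assms powr_mono[of \<beta> 1 2] by simp
    show "max x y powr \<beta> \<le> x powr \<beta> + y powr \<beta>" by (cases "x \<le> y") (auto simp: max_def)
  qed auto
  finally show ?thesis .
qed

context LUk begin

definition "Q Hs = embed_pmf (fH \<kappa> Hs)"

lemma pmf_Q: assumes Hs: "prob_on L U Hs" shows "pmf (Q Hs) x = fH \<kappa> Hs x"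
proof -
  have nn: "\<And>x. 0 \<le> fH \<kappa> Hs x" using fH_bounds(3)[OF Hs k0] less_imp_le by blast
  have "(\<integral>\<^sup>+x. ennreal (fH \<kappa> Hs x) \<partial>count_space UNIV) = (\<Sum>x. ennreal (fH \<kappa> Hs x))"
    by (rule nn_integral_count_space_nat)
  also have "\<dots> = ennreal 1"
    using suminf_ennreal2[OF nn sums_summable[OF fH_sums[OF Hs k0]]] sums_unique[OF fH_sums[OF Hs k0]] by simp
  finally have "(\<integral>\<^sup>+x. ennreal (fH \<kappa> Hs x) \<partial>count_space UNIV) = 1" by simp
  thus ?thesis unfolding Q_def by (rule pmf_embed_pmf[OF nn])
qed

definition "C2 = D * ((1 - \<omega> ^ 4) powr (- \<kappa>) + 1 / (1 - \<omega> ^ 2)) / 2"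

lemma wsqrt: assumes Hs: "prob_on L U Hs"
  shows "summable (\<lambda>x. w x * sqrt (fH \<kappa> Hs x))" "(\<Sum>x. w x * sqrt (fH \<kappa> Hs x)) \<le> C2"
proof -
  have D0: "D \<ge> 0" using w_nonneg[of 0] by (simp add: w_def)
  define g where "g x = D / 2 * (cc \<kappa> x * (\<omega> ^ 4) ^ x + (\<omega> ^ 2) ^ x)" for x
  have o4: "0 \<le> \<omega> ^ 4" "\<omega> ^ 4 < 1" "0 \<le> \<omega> ^ 2" "\<omega> ^ 2 < 1" using omega by (auto simp: power_less_one_iff)
  have gs: "g sums (D / 2 * ((1 - \<omega> ^ 4) powr (- \<kappa>) + 1 / (1 - \<omega> ^ 2)))"
    unfolding g_def by (intro sums_mult sums_add nb_sums[OF k0] o4 geometric_sums) (use o4 in auto)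
  have pw: "norm (w x * sqrt (fH \<kappa> Hs x)) \<le> g x" for x
  proof -
    have c: "cc \<kappa> x > 0" by (rule cc_pos[OF k0])
    have f: "0 < fH \<kappa> Hs x" "fH \<kappa> Hs x \<le> cc \<kappa> x * tL ^ x" using fH_bounds[OF Hs k0, of x] by auto
    have "norm (w x * sqrt (fH \<kappa> Hs x)) = D * ((1 / \<omega>) ^ x * sqrt (fH \<kappa> Hs x))"
      using D0 omega f by (simp add: w_def abs_mult)
    also have "\<dots> \<le> D * ((1 / \<omega>) ^ x * sqrt (cc \<kappa> x * tL ^ x))"
      using D0 f omega by (intro mult_left_mono real_sqrt_le_mono) auto
    also have "(1 / \<omega>) ^ x * sqrt (cc \<kappa> x * tL ^ x) = sqrt ((cc \<kappa> x * (\<omega> ^ 4) ^ x) * (\<omega> ^ 2) ^ x)"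
    proof -
      have "((1 / \<omega>) ^ 2) ^ x = ((1 / \<omega>) ^ x) ^ 2" by (metis power_mult mult.commute)
      hence "(1 / \<omega>) ^ x = sqrt (((1 / \<omega>) ^ 2) ^ x)" using omega by simp
      moreover have "((1 / \<omega>) ^ 2) ^ x * (cc \<kappa> x * tL ^ x) = (cc \<kappa> x * (\<omega> ^ 4) ^ x) * (\<omega> ^ 2) ^ x"
      proof -
        have "((1 / \<omega>) ^ 2) * tL = \<omega> ^ 4 * \<omega> ^ 2" unfolding omega(3)[symmetric] using omega
          by (simp add: field_simps eval_nat_numeral)
        hence "((1 / \<omega>) ^ 2) ^ x * tL ^ x = (\<omega> ^ 4) ^ x * (\<omega> ^ 2) ^ x" by (metis power_mult_distrib)
        thus ?thesis by (simp add: mult_ac)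
      qed
      ultimately show ?thesis by (simp add: real_sqrt_mult[symmetric])
    qed
    also have "D * sqrt ((cc \<kappa> x * (\<omega> ^ 4) ^ x) * (\<omega> ^ 2) ^ x) \<le> D * ((cc \<kappa> x * (\<omega> ^ 4) ^ x + (\<omega> ^ 2) ^ x) / 2)"
      using D0 c o4 by (intro mult_left_mono arith_geo_mean_sqrt) auto
    finally show ?thesis unfolding g_def by simp
  qed
  show s: "summable (\<lambda>x. w x * sqrt (fH \<kappa> Hs x))" by (rule summable_comparison_test'[OF sums_summable[OF gs] pw])
  have "(\<Sum>x. w x * sqrt (fH \<kappa> Hs x)) \<le> (\<Sum>x. g x)"
    by (rule suminf_le[OF _ s sums_summable[OF gs]]) (use pw in \<open>auto dest: abs_le_D1\<close>)
  also have "\<dots> = C2" using sums_unique[OF gs] unfolding C2_def by simp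
  finally show "(\<Sum>x. w x * sqrt (fH \<kappa> Hs x)) \<le> C2" .
qed

lemma Z_summable: assumes Hs: "prob_on L U Hs"
  shows "summable (\<lambda>x. \<bar>phat xs x - fH \<kappa> Hs x\<bar> * w x)"
proof -
  have sp: "summable (\<lambda>x. phat xs x * w x)"
  proof (cases "xs = []")
    case True thus ?thesis by (simp add: phat_def)
  qed (rule phat_summable)
  show ?thesis
  proof (rule summable_comparison_test'[where g="\<lambda>x. phat xs x * w x + fH \<kappa> Hs x * w x"])
    show "summable (\<lambda>x. phat xs x * w x + fH \<kappa> Hs x * w x)" by (intro summable_add sp fw_summable[OF Hs])
    fix x
    have "\<bar>phat xs x - fH \<kappa> Hs x\<bar> \<le> phat xs x + fH \<kappa> Hs x"
      using phat_nonneg[of xs x] fH_bounds(3)[OF Hs k0, of x] by linarith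
    hence "\<bar>phat xs x - fH \<kappa> Hs x\<bar> * w x \<le> (phat xs x + fH \<kappa> Hs x) * w x" using w_nonneg[of x] by (rule mult_right_mono)
    thus "norm (\<bar>phat xs x - fH \<kappa> Hs x\<bar> * w x) \<le> phat xs x * w x + fH \<kappa> Hs x * w x"
      using w_nonneg[of x] by (simp add: abs_mult distrib_right)
  qed
qed

lemma Z_nonneg: assumes Hs: "prob_on L U Hs" shows "0 \<le> Z xs Hs"
  unfolding Z_def by (rule suminf_nonneg[OF Z_summable[OF Hs]]) (use w_nonneg in simp)

definition "c1 = K0 * (2 / L) powr \<kappa>"

lemma c1_pos: "c1 > 0" unfolding c1_def using K0_pos L0 by simp

lemma pw_bound: assumes ne: "xs \<noteq> []" and np: "is_npmle \<kappa> L U xs Hh" and Hs: "prob_on L U Hs"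
  and eta: "\<eta> > 0"
  shows "TV (gH \<kappa> Hh) (gH \<kappa> Hs) \<le> c1 * ((2 * \<rho> ^ k / mk) powr \<beta> * (\<eta> powr (\<beta> / 2) + \<eta> powr (\<beta> / 2 - 1) * Z xs Hs)
      + (2 * q ^ k / (1 - q)) powr \<beta>)"
proof -
  have Hh: "prob_on L U Hh" using np unfolding is_npmle_def by simp
  define z where "z = Z xs Hs"
  have z0: "0 \<le> z" unfolding z_def by (rule Z_nonneg[OF Hs])
  define A where "A = 2 * \<rho> ^ k / mk"
  define Y where "Y = 2 * q ^ k / (1 - q)"
  have A0: "A \<ge> 0" unfolding A_def using cst by simp
  have Y0: "Y \<ge> 0" unfolding Y_def using cst by simp
  have e: "\<bar>fH \<kappa> Hh i - fH \<kappa> Hs i\<bar> \<le> 2 * sqrt z" for i unfolding z_def by (rule S1[OF ne np Hs])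
  have T: "TV (gH \<kappa> Hh) (gH \<kappa> Hs) \<le> 1/2 * K0 * (2 / L) powr \<kappa> * \<Phi> (2 * sqrt z) k powr \<beta>"
    by (rule TV_det[OF Hh Hs e])
  have Pe: "\<Phi> (2 * sqrt z) k = A * sqrt z + Y" unfolding \<Phi>_def A_def Y_def by simp
  have "\<Phi> (2 * sqrt z) k powr \<beta> \<le> 2 * ((A * sqrt z) powr \<beta> + Y powr \<beta>)"
    unfolding Pe using A0 Y0 z0 beta by (intro sub_powr) auto
  also have "(A * sqrt z) powr \<beta> = A powr \<beta> * z powr (\<beta> / 2)"
  proof -
    have "sqrt z powr \<beta> = z powr (\<beta> / 2)" using z0 by (simp add: powr_half_sqrt[symmetric] powr_powr)
    thus ?thesis using A0 z0 by (simp add: powr_mult)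
  qed
  also have "A powr \<beta> * z powr (\<beta> / 2) \<le> A powr \<beta> * (\<eta> powr (\<beta> / 2) + \<eta> powr (\<beta> / 2 - 1) * z)"
    using z0 eta beta by (intro mult_left_mono powr_lin) auto
  finally have "\<Phi> (2 * sqrt z) k powr \<beta> \<le> 2 * (A powr \<beta> * (\<eta> powr (\<beta> / 2) + \<eta> powr (\<beta> / 2 - 1) * z) + Y powr \<beta>)"
    by simp
  hence "1/2 * K0 * (2 / L) powr \<kappa> * \<Phi> (2 * sqrt z) k powr \<beta> \<le> 1/2 * K0 * (2 / L) powr \<kappa> * (2 * (A powr \<beta> * (\<eta> powr (\<beta> / 2) + \<eta> powr (\<beta> / 2 - 1) * z) + Y powr \<beta>))"
    using K0_pos L0 by (intro mult_left_mono) auto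
  moreover have "1/2 * K0 * (2 / L) powr \<kappa> * (2 * (A powr \<beta> * (\<eta> powr (\<beta> / 2) + \<eta> powr (\<beta> / 2 - 1) * z) + Y powr \<beta>))
     = c1 * (A powr \<beta> * (\<eta> powr (\<beta> / 2) + \<eta> powr (\<beta> / 2 - 1) * z) + Y powr \<beta>)"
    unfolding c1_def by simp
  ultimately show ?thesis using T unfolding A_def Y_def z_def by linarith
qed

lemma TV_nonneg: "0 \<le> TV g g'"
  unfolding TV_def set_lebesgue_integral_def
  by (intro mult_nonneg_nonneg Bochner_Integration.integral_nonneg) (auto simp: indicator_def)

lemma E_bound: assumes Hs: "prob_on L U Hs" and n: "n > 0"
  and np: "\<forall>xs. length xs = n \<longrightarrow> is_npmle \<kappa> L U xs (Hhat xs)"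
  shows "expect_data \<kappa> Hs n (\<lambda>xs. TV (gH \<kappa> (Hhat xs)) (gH \<kappa> Hs))
    \<le> c1 * ((2 * \<rho> ^ k / mk) powr \<beta> * (1 + C2) * real n powr (- \<beta> / 4) + (2 * q ^ k / (1 - q)) powr \<beta>)"
proof -
  define \<eta> where "\<eta> = real n powr (-1/2)"
  have eta: "\<eta> > 0" unfolding \<eta>_def using n by simp
  define A where "A = (2 * \<rho> ^ k / mk) powr \<beta>"
  define Y where "Y = (2 * q ^ k / (1 - q)) powr \<beta>"
  have A0: "A \<ge> 0" unfolding A_def by simp
  define R where "R = measure_pmf (replicate_pmf n (Q Hs))"
  have pQ: "pmf (Q Hs) x = fH \<kappa> Hs x" for x by (rule pmf_Q[OF Hs])
  have Zeq: "Z xs Hs = (\<Sum>x. \<bar>phat xs x - pmf (Q Hs) x\<bar> * w x)" for xs unfolding Z_def pQ ..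
  have EZ1: "integrable R (\<lambda>xs. Z xs Hs)" and EZ2: "integral\<^sup>L R (\<lambda>xs. Z xs Hs) \<le> (\<Sum>x. w x * sqrt (fH \<kappa> Hs x)) / sqrt n"
    using EZ[OF n w_nonneg, of "Q Hs"] fH_bounds(3)[OF Hs k0] fw_summable[OF Hs] wsqrt(1)[OF Hs]
    unfolding Zeq R_def pQ by auto
  define G where "G xs = c1 * (A * (\<eta> powr (\<beta> / 2) + \<eta> powr (\<beta> / 2 - 1) * Z xs Hs) + Y)" for xs
  have iG: "integrable R G" using EZ1 unfolding G_def R_def by simp
  have FG: "0 \<le> TV (gH \<kappa> (Hhat xs)) (gH \<kappa> Hs) \<and> TV (gH \<kappa> (Hhat xs)) (gH \<kappa> Hs) \<le> G xs"
    if "length xs = n" for xs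
  proof
    show "0 \<le> TV (gH \<kappa> (Hhat xs)) (gH \<kappa> Hs)" by (rule TV_nonneg)
    have ne: "xs \<noteq> []" using that n by auto
    show "TV (gH \<kappa> (Hhat xs)) (gH \<kappa> Hs) \<le> G xs"
      unfolding G_def A_def Y_def using pw_bound[OF ne np[rule_format, OF that] Hs eta] .
  qed
  have "expect_data \<kappa> Hs n (\<lambda>xs. TV (gH \<kappa> (Hhat xs)) (gH \<kappa> Hs)) \<le> integral\<^sup>L R G"
  proof -
    have X: "infsum (\<lambda>xs. (\<Prod>i<n. pmf (Q Hs) (xs ! i)) * TV (gH \<kappa> (Hhat xs)) (gH \<kappa> Hs)) {xs. length xs = n}
      \<le> integral\<^sup>L R G"
      unfolding R_def by (rule expect_le) (use FG iG in \<open>simp_all add: R_def\<close>)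
    have "expect_data \<kappa> Hs n (\<lambda>xs. TV (gH \<kappa> (Hhat xs)) (gH \<kappa> Hs))
       = infsum (\<lambda>xs. (\<Prod>i<n. pmf (Q Hs) (xs ! i)) * TV (gH \<kappa> (Hhat xs)) (gH \<kappa> Hs)) {xs. length xs = n}"
      unfolding expect_data_def by (simp only: pQ)
    with X show ?thesis by simp
  qed
  also have "integral\<^sup>L R G = c1 * (A * (\<eta> powr (\<beta> / 2) + \<eta> powr (\<beta> / 2 - 1) * integral\<^sup>L R (\<lambda>xs. Z xs Hs)) + Y)"
    unfolding G_def using EZ1 by (simp add: R_def prob_space_measure_pmf)
  also have "\<dots> \<le> c1 * (A * (\<eta> powr (\<beta> / 2) + \<eta> powr (\<beta> / 2 - 1) * (C2 / sqrt n)) + Y)"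
  proof -
    have "integral\<^sup>L R (\<lambda>xs. Z xs Hs) \<le> C2 / sqrt n"
      using EZ2 divide_right_mono[OF wsqrt(2)[OF Hs], of "sqrt n"] by simp
    thus ?thesis using c1_pos A0 by (intro mult_left_mono add_mono add_left_mono mult_left_mono) auto
  qed
  also have "\<eta> powr (\<beta> / 2 - 1) * (C2 / sqrt n) = C2 * real n powr (- \<beta> / 4)"
  proof -
    have "sqrt n = real n powr (1/2)" using n by (simp add: powr_half_sqrt)
    hence "\<eta> powr (\<beta> / 2 - 1) * (C2 / sqrt n) = C2 * (real n powr (-1/2 * (\<beta> / 2 - 1)) / real n powr (1/2))"
      unfolding \<eta>_def using n by (simp add: powr_powr)
    also have "real n powr (-1/2 * (\<beta> / 2 - 1)) / real n powr (1/2) = real n powr (- \<beta> / 4)"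
      using n by (simp add: powr_diff[symmetric] algebra_simps)
    finally show ?thesis .
  qed
  also have "\<eta> powr (\<beta> / 2) = real n powr (- \<beta> / 4)" unfolding \<eta>_def using n by (simp add: powr_powr)
  finally show ?thesis unfolding A_def Y_def by (simp add: algebra_simps)
qed

end


context LU begin
definition "\<alpha>s = \<beta> / 8 * min 1 (- ln q / ln \<rho>)"
end

context LUk begin

lemma alpha: "0 < \<alpha>s" "\<alpha>s < 1/2" "\<alpha>s \<le> \<beta> / 8" "\<alpha>s \<le> \<beta> * (- ln q) / (8 * ln \<rho>)"
proof -
  have lq: "- ln q > 0" using cst by simp
  have lr: "ln \<rho> > 0" using cst by simp
  have m: "0 < min 1 (- ln q / ln \<rho>)" "min 1 (- ln q / ln \<rho>) \<le> 1" "min 1 (- ln q / ln \<rho>) \<le> - ln q / ln \<rho>"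
    using lq lr by (auto simp: divide_neg_pos)
  show "0 < \<alpha>s" unfolding \<alpha>s_def using m beta by simp
  show "\<alpha>s \<le> \<beta> / 8" unfolding \<alpha>s_def using m beta by (simp add: mult_left_le)
  thus "\<alpha>s < 1/2" using beta by simp
  have "\<beta> / 8 * min 1 (- ln q / ln \<rho>) \<le> \<beta> / 8 * (- ln q / ln \<rho>)"
    by (rule mult_left_mono[OF m(3)]) (use beta in simp)
  also have "\<dots> = \<beta> * (- ln q) / (8 * ln \<rho>)" by simp
  finally show "\<alpha>s \<le> \<beta> * (- ln q) / (8 * ln \<rho>)" unfolding \<alpha>s_def .
qed

lemma C2_nonneg: "C2 \<ge> 0"
proof -
  have D0: "D \<ge> 0" using w_nonneg[of 0] by (simp add: w_def)
  have "\<omega> ^ 2 < 1" using omega by (simp add: power_less_one_iff)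
  hence "0 \<le> (1 - \<omega> ^ 4) powr (- \<kappa>) + 1 / (1 - \<omega> ^ 2)" by simp
  thus ?thesis unfolding C2_def using D0 by simp
qed

definition "Cf = c1 * ((2 / mk) powr \<beta> * (1 + C2) + (2 / (1 - q)) powr \<beta> * q powr (- \<beta>))"

lemma final_rate: assumes Hs: "prob_on L U Hs" and n: "n \<ge> 1"
  and np: "\<forall>xs. length xs = n \<longrightarrow> is_npmle \<kappa> L U xs (Hhat xs)"
  shows "expect_data \<kappa> Hs n (\<lambda>xs. TV (gH \<kappa> (Hhat xs)) (gH \<kappa> Hs)) \<le> Cf * real n powr (- \<alpha>s)"
proof -
  define t where "t = ln (real n) / (8 * ln \<rho>)"
  define k where "k = nat \<lfloor>t\<rfloor>"
  have lr: "ln \<rho> > 0" using cst by simp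
  have t0: "t \<ge> 0" unfolding t_def using n lr by simp
  have kt: "real k \<le> t" "real k > t - 1" unfolding k_def using t0 by linarith+
  have np0: "real n > 0" using n by simp
  have lnn: "ln (real n) \<ge> 0" using n by simp
  have C2n: "C2 \<ge> 0" by (rule C2_nonneg)
  have E: "expect_data \<kappa> Hs n (\<lambda>xs. TV (gH \<kappa> (Hhat xs)) (gH \<kappa> Hs))
    \<le> c1 * ((2 * \<rho> ^ k / mk) powr \<beta> * (1 + C2) * real n powr (- \<beta> / 4) + (2 * q ^ k / (1 - q)) powr \<beta>)"
    using E_bound[OF Hs _ np, of k] n by simp
  have r1: "(\<rho> ^ k) powr \<beta> \<le> real n powr (\<beta> / 8)"
  proof -
    have "(\<rho> ^ k) powr \<beta> = exp (\<beta> * (real k * ln \<rho>))" using cst by (simp add: powr_def ln_realpow)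
    also have "\<dots> \<le> exp (\<beta> * (t * ln \<rho>))" using kt lr beta by (intro exp_le_cancel_iff[THEN iffD2] mult_left_mono mult_right_mono) auto
    also have "\<dots> = real n powr (\<beta> / 8)" unfolding t_def using lr np0 by (simp add: powr_def)
    finally show ?thesis .
  qed
  have r2: "(q ^ k) powr \<beta> \<le> q powr (- \<beta>) * real n powr (- (\<beta> * (- ln q) / (8 * ln \<rho>)))"
  proof -
    have lq: "ln q < 0" using cst by simp
    have "(q ^ k) powr \<beta> = exp (\<beta> * (real k * ln q))" using cst by (simp add: powr_def ln_realpow)
    also have "\<dots> \<le> exp (\<beta> * ((t - 1) * ln q))"
      using kt lq beta by (intro exp_le_cancel_iff[THEN iffD2] mult_left_mono mult_right_mono_neg) auto
    also have "\<dots> = exp (- \<beta> * ln q) * exp (- (\<beta> * (- ln q) / (8 * ln \<rho>)) * ln (real n))"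
      unfolding t_def using lr by (simp add: exp_add[symmetric] field_simps)
    also have "\<dots> = q powr (- \<beta>) * real n powr (- (\<beta> * (- ln q) / (8 * ln \<rho>)))"
      using cst np0 by (simp add: powr_def)
    finally show ?thesis .
  qed
  have p1: "real n powr (\<beta> / 8) * real n powr (- \<beta> / 4) \<le> real n powr (- \<alpha>s)"
  proof -
    have "real n powr (\<beta> / 8) * real n powr (- \<beta> / 4) = real n powr (- (\<beta> / 8))"
      by (simp add: powr_add[symmetric])
    also have "\<dots> \<le> real n powr (- \<alpha>s)" using n alpha by (intro powr_mono) auto
    finally show ?thesis .
  qed
  have p2: "real n powr (- (\<beta> * (- ln q) / (8 * ln \<rho>))) \<le> real n powr (- \<alpha>s)"
    using n alpha by (intro powr_mono) auto
  have A: "(2 * \<rho> ^ k / mk) powr \<beta> * (1 + C2) * real n powr (- \<beta> / 4) \<le> (2 / mk) powr \<beta> * (1 + C2) * real n powr (- \<alpha>s)"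
  proof -
    have "(2 * \<rho> ^ k / mk) powr \<beta> = (2 / mk) powr \<beta> * (\<rho> ^ k) powr \<beta>"
      using cst by (simp add: powr_mult[symmetric])
    hence "(2 * \<rho> ^ k / mk) powr \<beta> * (1 + C2) * real n powr (- \<beta> / 4)
        = (2 / mk) powr \<beta> * (1 + C2) * ((\<rho> ^ k) powr \<beta> * real n powr (- \<beta> / 4))" by simp
    also have "\<dots> \<le> (2 / mk) powr \<beta> * (1 + C2) * (real n powr (\<beta> / 8) * real n powr (- \<beta> / 4))"
      using C2n r1 by (intro mult_left_mono mult_right_mono) auto
    also have "\<dots> \<le> (2 / mk) powr \<beta> * (1 + C2) * real n powr (- \<alpha>s)"
      using C2n p1 by (intro mult_left_mono) auto
    finally show ?thesis .
  qed
  have B: "(2 * q ^ k / (1 - q)) powr \<beta> \<le> (2 / (1 - q)) powr \<beta> * q powr (- \<beta>) * real n powr (- \<alpha>s)"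
  proof -
    have "(2 * q ^ k / (1 - q)) powr \<beta> = (2 / (1 - q)) powr \<beta> * (q ^ k) powr \<beta>"
      using cst by (simp add: powr_mult[symmetric])
    also have "\<dots> \<le> (2 / (1 - q)) powr \<beta> * (q powr (- \<beta>) * real n powr (- (\<beta> * (- ln q) / (8 * ln \<rho>))))"
      using r2 by (intro mult_left_mono) auto
    also have "\<dots> \<le> (2 / (1 - q)) powr \<beta> * (q powr (- \<beta>) * real n powr (- \<alpha>s))"
      using p2 by (intro mult_left_mono) auto
    finally show ?thesis by simp
  qed
  have "c1 * ((2 * \<rho> ^ k / mk) powr \<beta> * (1 + C2) * real n powr (- \<beta> / 4) + (2 * q ^ k / (1 - q)) powr \<beta>)
      \<le> c1 * ((2 / mk) powr \<beta> * (1 + C2) * real n powr (- \<alpha>s) + (2 / (1 - q)) powr \<beta> * q powr (- \<beta>) * real n powr (- \<alpha>s))"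
    using c1_pos A B by (intro mult_left_mono add_mono) auto
  also have "\<dots> = Cf * real n powr (- \<alpha>s)" unfolding Cf_def by (simp add: algebra_simps)
  finally show ?thesis using E by linarith
qed

lemma Cf_pos: "Cf > 0"
proof -
  have C2n: "C2 \<ge> 0" by (rule C2_nonneg)
  have "(2 / mk) powr \<beta> > 0" using cst by simp
  hence a: "(2 / mk) powr \<beta> * (1 + C2) > 0" using C2n by simp
  have b: "(2 / (1 - q)) powr \<beta> * q powr (- \<beta>) \<ge> 0" by simp
  have "(2 / mk) powr \<beta> * (1 + C2) + (2 / (1 - q)) powr \<beta> * q powr (- \<beta>) > 0" using a b by linarith
  thus ?thesis unfolding Cf_def using c1_pos by simp
qed

end

theorem theorem3p3:
  fixes L U :: real
  assumes "0 < L" "L < U"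
  shows "\<exists>\<alpha>::real. 0 < \<alpha> \<and> \<alpha> < 1/2 \<and>
    (\<forall>\<kappa>::real. \<kappa> > 0 \<longrightarrow> (\<exists>C::real. C > 0 \<and>
      (\<forall>(Hs::real measure) (n::nat) (Hhat::nat list \<Rightarrow> real measure).
         prob_on L U Hs \<longrightarrow> n \<ge> 2 \<longrightarrow>
         (\<forall>xs. length xs = n \<longrightarrow> is_npmle \<kappa> L U xs (Hhat xs)) \<longrightarrow>
         expect_data \<kappa> Hs n (\<lambda>xs. TV (gH \<kappa> (Hhat xs)) (gH \<kappa> Hs))
           \<le> C * real n powr (-\<alpha>) * ln (real n) powr (max (1 - \<kappa>) 0 + \<alpha>))))"
proof -
  interpret LU L U using assms by unfold_locales
  interpret K1: LUk L U 1 by unfold_locales simp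
  show ?thesis
  proof (rule exI[of _ \<alpha>s], intro conjI allI impI)
    show "0 < \<alpha>s" "\<alpha>s < 1/2" using K1.alpha by auto
    fix \<kappa> :: real assume k: "\<kappa> > 0"
    interpret K: LUk L U \<kappa> using k by unfold_locales
    define \<gamma> where "\<gamma> = max (1 - \<kappa>) 0 + \<alpha>s"
    have g0: "\<gamma> \<ge> 0" unfolding \<gamma>_def using K.alpha by simp
    define C where "C = K.Cf / ln 2 powr \<gamma>"
    have l2: "ln (2::real) > 0" by simp
    show "\<exists>C>0. \<forall>Hs n Hhat. prob_on L U Hs \<longrightarrow> 2 \<le> n \<longrightarrow>
       (\<forall>xs. length xs = n \<longrightarrow> is_npmle \<kappa> L U xs (Hhat xs)) \<longrightarrow>
       expect_data \<kappa> Hs n (\<lambda>xs. TV (gH \<kappa> (Hhat xs)) (gH \<kappa> Hs))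
       \<le> C * real n powr - \<alpha>s * ln (real n) powr (max (1 - \<kappa>) 0 + \<alpha>s)"
    proof (rule exI[of _ C], intro conjI allI impI)
      show "C > 0" unfolding C_def using K.Cf_pos l2 by simp
      fix Hs n Hhat assume Hs: "prob_on L U Hs" and n: "2 \<le> n"
        and np: "\<forall>xs. length xs = n \<longrightarrow> is_npmle \<kappa> L U xs (Hhat xs)"
      have "expect_data \<kappa> Hs n (\<lambda>xs. TV (gH \<kappa> (Hhat xs)) (gH \<kappa> Hs)) \<le> K.Cf * real n powr (- \<alpha>s)"
        using K.final_rate[OF Hs _ np] n by simp
      also have "K.Cf = C * ln 2 powr \<gamma>" unfolding C_def using l2 by simp
      also have "C * ln 2 powr \<gamma> * real n powr (- \<alpha>s) \<le> C * ln (real n) powr \<gamma> * real n powr (- \<alpha>s)"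
      proof -
        have "ln (2::real) \<le> ln (real n)" using n by simp
        hence "ln 2 powr \<gamma> \<le> ln (real n) powr \<gamma>" using g0 l2 by (intro powr_mono2) auto
        moreover have "C \<ge> 0" unfolding C_def using K.Cf_pos by simp
        ultimately show ?thesis by (intro mult_right_mono mult_left_mono) auto
      qed
      finally show "expect_data \<kappa> Hs n (\<lambda>xs. TV (gH \<kappa> (Hhat xs)) (gH \<kappa> Hs))
       \<le> C * real n powr - \<alpha>s * ln (real n) powr (max (1 - \<kappa>) 0 + \<alpha>s)"
        unfolding \<gamma>_def by (simp add: mult_ac)
    qed
  qed
qed


end
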